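(* Let $n\geq 2$ and let $\{e_l\}_{l\ge1}$ be the standard orthonormal basis of $\ell^2(\mathbb{N})$. Define $V_k$ ($1\le k\le n$) on $\ell^2(\mathbb{N})$ by $V_ke_l=e_{n(l-1)+k}$. Then $V=(V_1,\ldots,V_n)$ is an isometric $n$-tuple that is irreducible (i.e. $\mathrm{W}^*(V)=B(\ell^2(\mathbb{N}))$) and of dilation type.
   Context: An $n$-tuple is isometric if $V_i^*V_j=\delta_{ij}I$. $\mathrm{W}^*(V)$ is the von Neumann algebra generated by $V_1,\dots,V_n$. $F_n^2$ is the full Fock space over $\mathbb{C}^n$ with basis $\{\xi_w:w\in\mathbb{F}_n^*\}$, $L_i\xi_w=\xi_{iw}$; $\mathcal{A}_n$ / $\mathcal{L}_n$ are the norm-closed / weakly closed unital algebras generated by $L_1,\dots,L_n$. An isometric tuple is absolutely continuous if the homomorphism $L_w\mapsto V_w$ of $\mathcal{A}_n$ extends to a weak-* continuous representation of $\mathcal{L}_n$; singular if it has no absolutely continuous restriction to a nonzero invariant subspace; of dilation type if it has no nonzero direct summand that is absolutely continuous or singular. *)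

theory Defs
  imports "HOL-Analysis.Analysis"
begin

type_synonym 'a vec = "'a \<Rightarrow> complex"
type_synonym ('a, 'b) op = "'a vec \<Rightarrow> 'b vec"

definition ell2 :: "'a vec set" where
  "ell2 = {x. (\<lambda>i. (cmod (x i))^2) summable_on UNIV}"

definition vinner :: "'a vec \<Rightarrow> 'a vec \<Rightarrow> complex" where
  "vinner x y = infsum (\<lambda>i. cnj (x i) * y i) UNIV"

definition vnorm :: "'a vec \<Rightarrow> real" where
  "vnorm x = sqrt (infsum (\<lambda>i. (cmod (x i))^2) UNIV)"

definition vzero :: "'a vec" where "vzero = (\<lambda>i. 0)"

definition closed_subspace :: "'a vec set \<Rightarrow> 'a vec set \<Rightarrow> bool" where
  "closed_subspace H M \<longleftrightarrow> M \<subseteq> H \<and> vzero \<in> M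
     \<and> (\<forall>x\<in>M. \<forall>y\<in>M. \<forall>a b. (\<lambda>i. a * x i + b * y i) \<in> M)
     \<and> (\<forall>s x. (\<forall>k. s k \<in> M) \<and> x \<in> ell2 \<and> ((\<lambda>k. vnorm (\<lambda>i. s k i - x i)) \<longlonglongrightarrow> 0) \<longrightarrow> x \<in> M)"

definition ortho_compl :: "'a vec set \<Rightarrow> 'a vec set \<Rightarrow> 'a vec set" where
  "ortho_compl H M = {y \<in> H. \<forall>x\<in>M. vinner x y = 0}"

text \<open>Bounded linear operator on the (closed subspace) H; only its values on H matter.\<close>
definition bounded_op :: "'a vec set \<Rightarrow> ('a, 'a) op \<Rightarrow> bool" where
  "bounded_op H T \<longleftrightarrow> (\<forall>x\<in>H. T x \<in> H)
     \<and> (\<forall>x\<in>H. \<forall>y\<in>H. \<forall>a b. T (\<lambda>i. a * x i + b * y i) = (\<lambda>i. a * T x i + b * T y i))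
     \<and> (\<exists>C. \<forall>x\<in>H. vnorm (T x) \<le> C * vnorm x)"

definition adjoint_op :: "'a vec set \<Rightarrow> ('a, 'a) op \<Rightarrow> ('a, 'a) op" where
  "adjoint_op H T = (SOME S. bounded_op H S \<and> (\<forall>x\<in>H. \<forall>y\<in>H. vinner (T x) y = vinner x (S y)))"

definition commutant :: "'a vec set \<Rightarrow> ('a, 'a) op set \<Rightarrow> ('a, 'a) op set" where
  "commutant H S = {T. bounded_op H T \<and> (\<forall>A\<in>S. \<forall>x\<in>H. T (A x) = A (T x))}"

definition word_op :: "(nat \<Rightarrow> ('a, 'a) op) \<Rightarrow> nat list \<Rightarrow> ('a, 'a) op" where
  "word_op A w = foldr (\<lambda>i T. A i \<circ> T) w id"

definition isometric_tuple :: "'a vec set \<Rightarrow> nat \<Rightarrow> (nat \<Rightarrow> ('a, 'a) op) \<Rightarrow> bool" where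
  "isometric_tuple H n V \<longleftrightarrow> (\<forall>i\<in>{1..n}. bounded_op H (V i))
     \<and> (\<forall>i\<in>{1..n}. \<forall>j\<in>{1..n}. \<forall>x\<in>H.
           adjoint_op H (V i) (V j x) = (if i = j then x else vzero))"

text \<open>W*(V): the von Neumann algebra generated by V_1..V_n (double commutant of V_i, V_i^*).\<close>
definition wstar_alg :: "'a vec set \<Rightarrow> nat \<Rightarrow> (nat \<Rightarrow> ('a, 'a) op) \<Rightarrow> ('a, 'a) op set" where
  "wstar_alg H n V = commutant H (commutant H (V ` {1..n} \<union> adjoint_op H ` V ` {1..n}))"

definition invariant_sub :: "'a vec set \<Rightarrow> nat \<Rightarrow> (nat \<Rightarrow> ('a, 'a) op) \<Rightarrow> 'a vec set \<Rightarrow> bool" where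
  "invariant_sub H n V M \<longleftrightarrow> closed_subspace H M \<and> (\<forall>i\<in>{1..n}. \<forall>x\<in>M. V i x \<in> M)"

definition reducing_sub :: "'a vec set \<Rightarrow> nat \<Rightarrow> (nat \<Rightarrow> ('a, 'a) op) \<Rightarrow> 'a vec set \<Rightarrow> bool" where
  "reducing_sub H n V M \<longleftrightarrow> invariant_sub H n V M \<and> invariant_sub H n V (ortho_compl H M)"

definition wot :: "'a vec set \<Rightarrow> ('a, 'a) op topology" where
  "wot H = topology_generated_by
     {{T. vinner (T x) y \<in> U} | x y U. x \<in> H \<and> y \<in> H \<and> open U}"

definition wstar_top :: "'a vec set \<Rightarrow> ('a, 'a) op topology" where
  "wstar_top H = topology_generated_by
     {{T. (\<Sum>k. vinner (T (xs k)) (ys k)) \<in> U} | xs ys U.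
        (\<forall>k. xs k \<in> H \<and> ys k \<in> H) \<and> summable (\<lambda>k. (vnorm (xs k))^2)
        \<and> summable (\<lambda>k. (vnorm (ys k))^2) \<and> open U}"

definition words :: "nat \<Rightarrow> nat list set" where
  "words n = {w. set w \<subseteq> {1..n}}"

definition fock :: "nat \<Rightarrow> nat list vec set" where
  "fock n = {x \<in> ell2. \<forall>w. x w \<noteq> 0 \<longrightarrow> w \<in> words n}"

text \<open>Left creation operators: L_i xi_w = xi_{iw}.\<close>
definition Lcre :: "nat \<Rightarrow> (nat list, nat list) op" where
  "Lcre i x = (\<lambda>u. if u \<noteq> [] \<and> hd u = i then x (tl u) else 0)"

definition poly_ops :: "nat \<Rightarrow> (nat list, nat list) op set" where
  "poly_ops n = {T. \<exists>S c. finite S \<and> S \<subseteq> words n \<and>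
       (\<forall>x. T x = (\<lambda>u. \<Sum>w\<in>S. c w * word_op Lcre w x u))}"

definition Ln :: "nat \<Rightarrow> (nat list, nat list) op set" where
  "Ln n = {T. bounded_op (fock n) T} \<inter> (wot (fock n) closure_of poly_ops n)"

definition abs_cont :: "nat \<Rightarrow> 'a vec set \<Rightarrow> (nat \<Rightarrow> ('a, 'a) op) \<Rightarrow> bool" where
  "abs_cont n M V \<longleftrightarrow> (\<exists>\<Phi> :: (nat list, nat list) op \<Rightarrow> ('a, 'a) op.
      (\<forall>T\<in>Ln n. bounded_op M (\<Phi> T))
    \<and> (\<forall>w\<in>words n. \<forall>x\<in>M. \<Phi> (word_op Lcre w) x = word_op V w x)
    \<and> (\<forall>S\<in>Ln n. \<forall>T\<in>Ln n. \<forall>a b. \<forall>x\<in>M.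
          \<Phi> (\<lambda>y u. a * S y u + b * T y u) x = (\<lambda>u. a * \<Phi> S x u + b * \<Phi> T x u))
    \<and> (\<forall>S\<in>Ln n. \<forall>T\<in>Ln n. \<forall>x\<in>M. \<Phi> (S \<circ> T) x = \<Phi> S (\<Phi> T x))
    \<and> (\<forall>x\<in>M. \<Phi> id x = x)
    \<and> continuous_map (subtopology (wstar_top (fock n)) (Ln n)) (wstar_top M) \<Phi>)"

definition singular_tuple :: "nat \<Rightarrow> 'a vec set \<Rightarrow> (nat \<Rightarrow> ('a, 'a) op) \<Rightarrow> bool" where
  "singular_tuple n H V \<longleftrightarrow>
     (\<forall>M. invariant_sub H n V M \<and> M \<noteq> {vzero} \<longrightarrow> \<not> abs_cont n M V)"

definition dilation_type :: "nat \<Rightarrow> 'a vec set \<Rightarrow> (nat \<Rightarrow> ('a, 'a) op) \<Rightarrow> bool" where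
  "dilation_type n H V \<longleftrightarrow>
     (\<forall>M. reducing_sub H n V M \<and> M \<noteq> {vzero} \<longrightarrow>
          \<not> abs_cont n M V \<and> \<not> singular_tuple n M V)"

end

theory Submission
  imports Defs
begin

definition nsq :: "'a vec \<Rightarrow> real" where "nsq x = infsum (\<lambda>i. (cmod (x i))^2) UNIV"

lemma nsq_nonneg: "nsq x \<ge> 0"
  unfolding nsq_def by (rule infsum_nonneg) simp

lemma vnorm_nsq: "vnorm x = sqrt (nsq x)"
  by (simp add: vnorm_def nsq_def)

lemma vnorm_sq: "(vnorm x)^2 = nsq x"
  by (simp add: vnorm_nsq nsq_nonneg)

lemma sq_add_bound: "(cmod (u + v))^2 \<le> 2 * (cmod u)^2 + 2 * (cmod v)^2"
proof -
  have "cmod (u+v) \<le> cmod u + cmod v" by (rule norm_triangle_ineq)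
  hence "(cmod (u+v))^2 \<le> (cmod u + cmod v)^2" by (simp add: power_mono)
  also have "\<dots> \<le> 2 * (cmod u)^2 + 2 * (cmod v)^2"
    by (smt (verit) sum_squares_bound zero_le_power2 power2_sum)
  finally show ?thesis .
qed

lemma prod_bound_eps:
  assumes "e > 0"
  shows "cmod (u * v) \<le> (e * (cmod u)^2 + (cmod v)^2 / e) / 2"
proof -
  define a where "a = cmod u"
  define b where "b = cmod v"
  have "0 \<le> (e * a - b)^2" by simp
  hence "2 * e * (a * b) \<le> (e * a)^2 + b^2"
    by (simp add: power2_diff algebra_simps)
  hence "a * b \<le> ((e * a)^2 + b^2) / (2 * e)"
    using assms by (simp add: field_simps)
  also have "\<dots> = (e * a^2 + b^2 / e) / 2"
    using assms by (simp add: field_simps power2_eq_square)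
  finally show ?thesis by (simp add: norm_mult a_def b_def)
qed

lemma prod_bound: "cmod (u * v) \<le> ((cmod u)^2 + (cmod v)^2) / 2"
  using prod_bound_eps[of 1 u v] by simp

lemma ell2_iff: "x \<in> ell2 \<longleftrightarrow> (\<lambda>i. (cmod (x i))^2) summable_on UNIV"
  by (simp add: ell2_def)

lemma ell2_comb:
  assumes "x \<in> ell2" "y \<in> ell2"
  shows "(\<lambda>i. a * x i + b * y i) \<in> ell2"
proof -
  have s: "(\<lambda>i. 2 * (cmod a)^2 * (cmod (x i))^2 + 2 * (cmod b)^2 * (cmod (y i))^2) summable_on UNIV"
    using assms unfolding ell2_iff
    by (intro summable_on_add summable_on_cmult_right) auto
  show ?thesis unfolding ell2_iff
  proof (rule summable_on_comparison_test[OF s])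
    fix i
    show "(cmod (a * x i + b * y i))^2 \<le> 2 * (cmod a)^2 * (cmod (x i))^2 + 2 * (cmod b)^2 * (cmod (y i))^2"
      using sq_add_bound[of "a * x i" "b * y i"] by (simp add: norm_mult power_mult_distrib)
  qed simp
qed

lemma vzero_ell2[simp]: "vzero \<in> ell2"
  by (simp add: ell2_def vzero_def)

lemma nsq_vzero[simp]: "nsq vzero = 0"
  by (simp add: nsq_def vzero_def)

lemma vinner_abs_summable:
  assumes "x \<in> ell2" "y \<in> ell2"
  shows "(\<lambda>i. norm (cnj (x i) * y i)) summable_on UNIV"
  apply (rule Infinite_Sum.abs_summable_on_comparison_test'[where g="\<lambda>i. (1/2) * ((cmod (x i))^2 + (cmod (y i))^2)"])
  using assms unfolding ell2_iff
  apply (intro summable_on_cmult_right summable_on_add; simp)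
  using prod_bound by (metis complex_mod_cnj mult.commute divide_inverse inverse_eq_divide)

lemma vinner_summable:
  assumes "x \<in> ell2" "y \<in> ell2"
  shows "(\<lambda>i. cnj (x i) * y i) summable_on UNIV"
  by (rule abs_summable_summable[OF vinner_abs_summable[OF assms]])

lemma vinner_bound_eps:
  assumes "x \<in> ell2" "y \<in> ell2" "e > 0"
  shows "cmod (vinner x y) \<le> (e * nsq x + nsq y / e) / 2"
proof -
  have "cmod (vinner x y) \<le> infsum (\<lambda>i. cmod (cnj (x i) * y i)) UNIV"
    unfolding vinner_def by (rule norm_infsum_bound[OF vinner_abs_summable[OF assms(1,2)]])
  also have "\<dots> \<le> infsum (\<lambda>i. (1/2) * (e * (cmod (x i))^2 + (1/e) * (cmod (y i))^2)) UNIV"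
    apply (rule infsum_mono[OF vinner_abs_summable[OF assms(1,2)]])
    using assms(1,2) unfolding ell2_iff
     apply (intro summable_on_add summable_on_cmult_right; simp)
    subgoal for i using prod_bound_eps[OF assms(3), of "cnj (x i)" "y i"] by simp
    done
  also have "\<dots> = (1/2) * (e * nsq x + (1/e) * nsq y)"
  proof -
    have sx: "(\<lambda>i. (cmod (x i))^2) summable_on UNIV" and sy: "(\<lambda>i. (cmod (y i))^2) summable_on UNIV"
      using assms unfolding ell2_iff by auto
    have "infsum (\<lambda>i. (1/2) * (e * (cmod (x i))^2 + (1/e) * (cmod (y i))^2)) UNIV
       = (1/2) * infsum (\<lambda>i. e * (cmod (x i))^2 + (1/e) * (cmod (y i))^2) UNIV"
      by (rule infsum_cmult_right) (intro summable_on_add summable_on_cmult_right sx sy)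
    also have "infsum (\<lambda>i. e * (cmod (x i))^2 + (1/e) * (cmod (y i))^2) UNIV
       = infsum (\<lambda>i. e * (cmod (x i))^2) UNIV + infsum (\<lambda>i. (1/e) * (cmod (y i))^2) UNIV"
      by (rule infsum_add) (intro summable_on_cmult_right sx sy)+
    also have "infsum (\<lambda>i. e * (cmod (x i))^2) UNIV = e * nsq x"
      unfolding nsq_def by (rule infsum_cmult_right) (rule sx)
    also have "infsum (\<lambda>i. (1/e) * (cmod (y i))^2) UNIV = (1/e) * nsq y"
      unfolding nsq_def by (rule infsum_cmult_right) (rule sy)
    finally show ?thesis .
  qed
  also have "\<dots> = (e * nsq x + nsq y / e) / 2" by simp
  finally show ?thesis .
qed


definition bas :: "'a \<Rightarrow> 'a vec" where "bas j = (\<lambda>i. if i = j then 1 else 0)"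

lemma coord_bound:
  assumes "x \<in> ell2" shows "(cmod (x j))^2 \<le> nsq x"
proof -
  have "sum (\<lambda>i. (cmod (x i))^2) {j} \<le> nsq x"
    unfolding nsq_def using assms unfolding ell2_iff
    by (intro finite_sum_le_infsum) auto
  thus ?thesis by simp
qed

lemma nsq_zero_imp:
  assumes "x \<in> ell2" "nsq x = 0" shows "x = vzero"
proof
  fix j show "x j = vzero j" using coord_bound[OF assms(1), of j] assms(2) by (simp add: vzero_def)
qed

lemma infsum_of_real_c: "infsum (\<lambda>i. complex_of_real (f i)) A = complex_of_real (infsum f A)"
proof (cases "f summable_on A")
  case True
  show ?thesis by (rule infsumI) (rule has_sum_of_real[OF has_sum_infsum[OF True]])
next
  case False
  have "\<not> (\<lambda>i. complex_of_real (f i)) summable_on A"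
  proof
    assume "(\<lambda>i. complex_of_real (f i)) summable_on A"
    from summable_on_bounded_linear[OF bounded_linear_Re this] have "f summable_on A" by simp
    with False show False by simp
  qed
  thus ?thesis using False by (simp add: infsum_not_exists)
qed

lemma vinner_self: "vinner x x = complex_of_real (nsq x)"
proof -
  have "vinner x x = infsum (\<lambda>i. complex_of_real ((cmod (x i))^2)) UNIV"
    unfolding vinner_def by (rule infsum_cong) (simp only: complex_norm_square mult.commute[of "cnj _"])
  also have "\<dots> = complex_of_real (nsq x)"
    unfolding nsq_def by (rule infsum_of_real_c)
  finally show ?thesis .
qed

lemma bas_ell2[simp]: "bas j \<in> ell2"
proof -
  have "(\<lambda>i. (cmod (bas j i))^2) summable_on {j}" by simp
  thus ?thesis unfolding ell2_iff
    by (subst summable_on_cong_neutral[where T="{j}"]) (auto simp: bas_def)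
qed

lemma vinner_bas_left: "vinner (bas j) y = y j"
proof -
  have "vinner (bas j) y = infsum (\<lambda>i. cnj (bas j i) * y i) {j}"
    unfolding vinner_def by (rule infsum_cong_neutral) (auto simp: bas_def)
  thus ?thesis by (simp add: bas_def)
qed

lemma vinner_bas_right: "vinner x (bas j) = cnj (x j)"
proof -
  have "vinner x (bas j) = infsum (\<lambda>i. cnj (x i) * bas j i) {j}"
    unfolding vinner_def by (rule infsum_cong_neutral) (auto simp: bas_def)
  thus ?thesis by (simp add: bas_def)
qed

lemma tail_small:
  fixes f :: "'a \<Rightarrow> real"
  assumes "f summable_on UNIV" "\<And>i. f i \<ge> 0" "e > 0"
  shows "\<exists>F. finite F \<and> (\<forall>B. B \<inter> F = {} \<longrightarrow> infsum f B \<le> e)"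
proof -
  obtain F where F: "finite F" "dist (sum f F) (infsum f UNIV) \<le> e"
    using infsum_finite_approximation[OF assms(1) assms(3)] by blast
  have "infsum f B \<le> e" if "B \<inter> F = {}" for B
  proof -
    have sB: "f summable_on B" by (rule summable_on_subset[OF assms(1)]) simp
    have sBF: "f summable_on (B \<union> F)" by (rule summable_on_subset[OF assms(1)]) simp
    have sF: "f summable_on F" using F(1) by (rule summable_on_finite)
    have 1: "infsum f (B \<union> F) = infsum f B + infsum f F"
      by (rule infsum_Un_disjoint[OF sB sF that])
    have 2: "infsum f (B \<union> F) \<le> infsum f UNIV"
      by (rule infsum_mono2[OF sBF assms(1)]) (use assms(2) in simp_all)
    have 3: "infsum f F = sum f F" using F(1) by (rule infsum_finite)
    have 4: "\<bar>sum f F - infsum f UNIV\<bar> \<le> e" using F(2) by (simp only: dist_real_def)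
    show ?thesis using 1 2 3 4 by linarith
  qed
  thus ?thesis using F by blast
qed

lemma tail_small_nat:
  fixes f :: "nat \<Rightarrow> real"
  assumes "f summable_on UNIV" "\<And>i. f i \<ge> 0" "e > 0"
  shows "\<exists>N. \<forall>B. B \<subseteq> {N..} \<longrightarrow> infsum f B \<le> e"
proof -
  obtain F where F: "finite F" "\<forall>B. B \<inter> F = {} \<longrightarrow> infsum f B \<le> e"
    using tail_small[OF assms] by blast
  obtain N where "F \<subseteq> {..<N}" using F(1) finite_nat_bounded by blast
  have "infsum f B \<le> e" if "B \<subseteq> {N..}" for B
  proof -
    have "B \<inter> F = {}" unfolding disjoint_iff
      using that \<open>F \<subseteq> {..<N}\<close> by (meson atLeast_iff lessThan_iff not_le subsetD)
    thus ?thesis using F(2) by blast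
  qed
  thus ?thesis by blast
qed

lemma nsq_restrict:
  "nsq (\<lambda>i. if i \<in> B then x i else 0) = infsum (\<lambda>i. (cmod (x i))^2) B"
  unfolding nsq_def by (rule infsum_cong_neutral) auto

definition trunc :: "nat \<Rightarrow> nat vec \<Rightarrow> nat vec" where
  "trunc N x = (\<lambda>i. if i < N then x i else 0)"

lemma trunc_conv:
  assumes "x \<in> ell2"
  shows "(\<lambda>N. vnorm (\<lambda>i. trunc N x i - x i)) \<longlonglongrightarrow> 0"
proof (rule LIMSEQ_I)
  fix r :: real assume r: "r > 0"
  obtain N where N: "\<forall>B. B \<subseteq> {N..} \<longrightarrow> infsum (\<lambda>i. (cmod (x i))^2) B \<le> r^2 / 2"
    using tail_small_nat[of "\<lambda>i. (cmod (x i))^2" "r^2/2"] assms r unfolding ell2_iff by auto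
  have "norm (vnorm (\<lambda>i. trunc M x i - x i) - 0) < r" if "M \<ge> N" for M
  proof -
    have "(\<lambda>i. trunc M x i - x i) = (\<lambda>i. if i \<in> {M..} then - x i else 0)"
      by (auto simp: trunc_def)
    hence "nsq (\<lambda>i. trunc M x i - x i) = nsq (\<lambda>i. if i \<in> {M..} then - x i else 0)"
      by simp
    also have "\<dots> = infsum (\<lambda>i. (cmod (- x i))^2) {M..}" by (rule nsq_restrict)
    also have "\<dots> = infsum (\<lambda>i. (cmod (x i))^2) {M..}" by simp
    also have "\<dots> \<le> r^2/2" using N that by auto
    moreover have "r^2 > 0" using r by simp
    ultimately have "nsq (\<lambda>i. trunc M x i - x i) < r^2" by linarith
    hence "sqrt (nsq (\<lambda>i. trunc M x i - x i)) < sqrt (r^2)" by (rule real_sqrt_less_mono)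
    hence "vnorm (\<lambda>i. trunc M x i - x i) < r"
      unfolding vnorm_nsq using r by simp
    thus ?thesis using real_sqrt_ge_zero[OF nsq_nonneg, of "\<lambda>i. trunc M x i - x i"] by (simp add: vnorm_nsq)
  qed
  thus "\<exists>no. \<forall>n\<ge>no. norm (vnorm (\<lambda>i. trunc n x i - x i) - 0) < r" by blast
qed

lemma closed_subspace_comb:
  "closed_subspace H M \<Longrightarrow> x \<in> M \<Longrightarrow> y \<in> M \<Longrightarrow> (\<lambda>i. a * x i + b * y i) \<in> M"
  unfolding closed_subspace_def by blast

lemma closed_subspace_scale:
  "closed_subspace H M \<Longrightarrow> x \<in> M \<Longrightarrow> (\<lambda>i. a * x i) \<in> M"
  using closed_subspace_comb[of H M x x a 0] by simp

lemma closed_subspace_full: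
  assumes M: "closed_subspace ell2 M" and b: "\<And>m. bas m \<in> M"
  shows "M = (ell2 :: nat vec set)"
proof
  show "M \<subseteq> ell2" using M unfolding closed_subspace_def by blast
  show "ell2 \<subseteq> M"
  proof
    fix x :: "nat vec" assume x: "x \<in> ell2"
    have tr: "trunc N x \<in> M" for N
    proof (induction N)
      case 0
      have "trunc 0 x = vzero" by (simp add: trunc_def vzero_def)
      thus ?case using M unfolding closed_subspace_def by simp
    next
      case (Suc N)
      have "trunc (Suc N) x = (\<lambda>i. 1 * trunc N x i + x N * bas N i)"
        by (rule ext) (auto simp: trunc_def bas_def less_Suc_eq)
      thus ?case using closed_subspace_comb[OF M Suc b, of 1 "x N" N] by simp
    qed
    have cl: "\<And>s y. (\<forall>k. s k \<in> M) \<Longrightarrow> y \<in> ell2 \<Longrightarrow> ((\<lambda>k. vnorm (\<lambda>i. s k i - y i)) \<longlonglongrightarrow> 0) \<Longrightarrow> y \<in> M"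
      using M unfolding closed_subspace_def by blast
    show "x \<in> M" by (rule cl[of "\<lambda>k. trunc k x"]) (use tr x trunc_conv[OF x] in auto)
  qed
qed


definition Vop :: "nat \<Rightarrow> nat \<Rightarrow> nat vec \<Rightarrow> nat vec" where
  "Vop n k x = (\<lambda>m. if m mod n = k - 1 then x (m div n) else 0)"

definition Wop :: "nat \<Rightarrow> nat \<Rightarrow> nat vec \<Rightarrow> nat vec" where
  "Wop n k y = (\<lambda>l. y (n * l + (k - 1)))"

lemma Vop_at:
  assumes "n > 0" "k \<in> {1..n}"
  shows "Vop n k x (n * l + (k - 1)) = x l"
proof -
  have "k - 1 < n" using assms by auto
  thus ?thesis using assms(1) by (simp add: Vop_def)
qed

lemma Vop_out:
  assumes "n > 0" "m \<notin> range (\<lambda>l. n * l + (k - 1))"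
  shows "Vop n k x m = 0"
proof (rule ccontr)
  assume "Vop n k x m \<noteq> 0"
  hence "m mod n = k - 1" by (simp add: Vop_def split: if_splits)
  hence "m = n * (m div n) + (k - 1)" by (metis div_mult_mod_eq mult.commute)
  thus False using assms(2) by blast
qed

lemma inj_aff: "n > 0 \<Longrightarrow> inj (\<lambda>l::nat. n * l + c)"
  by (auto simp: inj_def)

lemma reindex_aff:
  assumes "n > 0" "k \<in> {1..n}" and that: "\<And>m. f 0 m = 0"
  shows "infsum (\<lambda>m. f (Vop n k x m) m) UNIV = infsum (\<lambda>l. f (x l) (n * l + (k - 1))) UNIV"
    and "(\<lambda>m. f (Vop n k x m) m) summable_on UNIV \<longleftrightarrow> (\<lambda>l. f (x l) (n * l + (k - 1))) summable_on UNIV"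
proof -
  let ?g = "\<lambda>l. n * l + (k - 1)"
  have z: "\<And>m. m \<in> UNIV - range ?g \<Longrightarrow> f (Vop n k x m) m = 0"
    using Vop_out[OF assms(1)] that by auto
  have "infsum (\<lambda>m. f (Vop n k x m) m) UNIV = infsum (\<lambda>m. f (Vop n k x m) m) (range ?g)"
    by (rule infsum_cong_neutral) (use z in auto)
  also have "\<dots> = infsum ((\<lambda>m. f (Vop n k x m) m) \<circ> ?g) UNIV"
    by (rule infsum_reindex[OF inj_aff[OF assms(1)]])
  also have "\<dots> = infsum (\<lambda>l. f (x l) (n * l + (k - 1))) UNIV"
    by (simp only: o_def Vop_at[OF assms(1,2)])
  finally show "infsum (\<lambda>m. f (Vop n k x m) m) UNIV = infsum (\<lambda>l. f (x l) (n * l + (k - 1))) UNIV" .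
  have "(\<lambda>m. f (Vop n k x m) m) summable_on UNIV \<longleftrightarrow> (\<lambda>m. f (Vop n k x m) m) summable_on (range ?g)"
    by (rule summable_on_cong_neutral) (use z in auto)
  also have "\<dots> \<longleftrightarrow> ((\<lambda>m. f (Vop n k x m) m) \<circ> ?g) summable_on UNIV"
    by (rule summable_on_reindex[OF inj_aff[OF assms(1)]])
  also have "\<dots> \<longleftrightarrow> (\<lambda>l. f (x l) (n * l + (k - 1))) summable_on UNIV"
    by (simp only: o_def Vop_at[OF assms(1,2)])
  finally show "(\<lambda>m. f (Vop n k x m) m) summable_on UNIV \<longleftrightarrow> (\<lambda>l. f (x l) (n * l + (k - 1))) summable_on UNIV" .
qed

lemma Vop_ell2:
  assumes "n > 0" "k \<in> {1..n}" "x \<in> ell2" shows "Vop n k x \<in> ell2"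
  using reindex_aff(2)[OF assms(1,2) _, where f="\<lambda>v m. (cmod v)^2" and x=x] assms(3)
  unfolding ell2_iff by simp

lemma nsq_Vop:
  assumes "n > 0" "k \<in> {1..n}" shows "nsq (Vop n k x) = nsq x"
  using reindex_aff(1)[OF assms(1,2) _, where f="\<lambda>v m. (cmod v)^2" and x=x]
  unfolding nsq_def by simp

lemma Vop_lin: "Vop n k (\<lambda>i. a * x i + b * y i) = (\<lambda>i. a * Vop n k x i + b * Vop n k y i)"
  by (rule ext) (simp add: Vop_def)

lemma Wop_lin: "Wop n k (\<lambda>i. a * x i + b * y i) = (\<lambda>i. a * Wop n k x i + b * Wop n k y i)"
  by (rule ext) (simp add: Wop_def)

lemma Vop_vzero[simp]: "Vop n k vzero = vzero"
  by (rule ext) (simp add: Vop_def vzero_def)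

lemma bounded_Vop:
  assumes "n > 0" "k \<in> {1..n}" shows "bounded_op ell2 (Vop n k)"
  unfolding bounded_op_def
proof (intro conjI ballI allI exI)
  show "\<And>x. x \<in> ell2 \<Longrightarrow> Vop n k x \<in> ell2" using Vop_ell2[OF assms] by blast
  show "\<And>x y a b. Vop n k (\<lambda>i. a * x i + b * y i) = (\<lambda>i. a * Vop n k x i + b * Vop n k y i)"
    by (rule Vop_lin)
  show "\<And>x. vnorm (Vop n k x) \<le> 1 * vnorm x" by (simp add: vnorm_nsq nsq_Vop[OF assms])
qed

lemma Wop_ell2:
  assumes "n > 0" "y \<in> ell2" shows "Wop n k y \<in> ell2" and "nsq (Wop n k y) \<le> nsq y"
proof -
  let ?g = "\<lambda>l. n * l + (k - 1)"
  let ?f = "\<lambda>m. (cmod (y m))^2"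
  have s: "?f summable_on UNIV" using assms(2) unfolding ell2_iff .
  have sr: "?f summable_on range ?g" by (rule summable_on_subset[OF s]) simp
  hence "(?f \<circ> ?g) summable_on UNIV" using summable_on_reindex[OF inj_aff[OF assms(1)]] by blast
  thus "Wop n k y \<in> ell2" unfolding ell2_iff Wop_def by (simp add: o_def)
  have "nsq (Wop n k y) = infsum (?f \<circ> ?g) UNIV" unfolding nsq_def Wop_def by (simp add: o_def)
  also have "\<dots> = infsum ?f (range ?g)" by (rule infsum_reindex[OF inj_aff[OF assms(1)], symmetric])
  also have "\<dots> \<le> infsum ?f UNIV" by (rule infsum_mono2[OF sr s]) auto
  finally show "nsq (Wop n k y) \<le> nsq y" unfolding nsq_def .
qed

lemma bounded_Wop:
  assumes "n > 0" shows "bounded_op ell2 (Wop n k)"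
  unfolding bounded_op_def
proof (intro conjI ballI allI exI)
  show "\<And>x. x \<in> ell2 \<Longrightarrow> Wop n k x \<in> ell2" using Wop_ell2[OF assms] by blast
  show "\<And>x y a b. Wop n k (\<lambda>i. a * x i + b * y i) = (\<lambda>i. a * Wop n k x i + b * Wop n k y i)"
    by (rule Wop_lin)
  show "\<And>x. x \<in> ell2 \<Longrightarrow> vnorm (Wop n k x) \<le> 1 * vnorm x"
    using Wop_ell2(2)[OF assms] by (simp add: vnorm_nsq)
qed

lemma Vop_adj:
  assumes "n > 0" "k \<in> {1..n}" shows "vinner (Vop n k x) y = vinner x (Wop n k y)"
  unfolding vinner_def using reindex_aff(1)[OF assms _, where f="\<lambda>v m. cnj v * y m" and x=x]
  by (simp add: Wop_def)

lemma adj_unique: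
  assumes "\<forall>x\<in>ell2. \<forall>y\<in>ell2. vinner (T x) y = vinner x (S y)"
      and "\<forall>x\<in>ell2. \<forall>y\<in>ell2. vinner (T x) y = vinner x (S' y)"
      and "y \<in> ell2"
  shows "S y = S' y"
proof
  fix j
  have "S y j = vinner (bas j) (S y)" by (simp add: vinner_bas_left)
  also have "\<dots> = vinner (T (bas j)) y" using assms(1,3) by simp
  also have "\<dots> = vinner (bas j) (S' y)" using assms(2,3) by simp
  also have "\<dots> = S' y j" by (simp add: vinner_bas_left)
  finally show "S y j = S' y j" .
qed

lemma adjoint_Vop:
  assumes "n > 0" "k \<in> {1..n}" "y \<in> ell2"
  shows "adjoint_op ell2 (Vop n k) y = Wop n k y"
proof -
  let ?P = "\<lambda>S. bounded_op ell2 S \<and> (\<forall>x\<in>ell2. \<forall>y\<in>ell2. vinner (Vop n k x) y = vinner x (S y))"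
  have ex: "?P (Wop n k)" using bounded_Wop[OF assms(1)] Vop_adj[OF assms(1,2)] by blast
  have "?P (SOME S. ?P S)" by (rule someI[of ?P, OF ex])
  hence "?P (adjoint_op ell2 (Vop n k))" unfolding adjoint_op_def .
  thus ?thesis using adj_unique[of "Vop n k" "adjoint_op ell2 (Vop n k)" "Wop n k"] ex assms(3) by blast
qed

lemma Wop_Vop:
  assumes "n > 0" "i \<in> {1..n}" "j \<in> {1..n}"
  shows "Wop n i (Vop n j x) = (if i = j then x else vzero)"
proof (rule ext)
  fix l
  have lt: "i - 1 < n" using assms by auto
  have "(n * l + (i - 1)) mod n = i - 1" "(n * l + (i - 1)) div n = l" using lt assms(1) by auto
  moreover have "(i - 1 = j - 1) = (i = j)" using assms by auto
  ultimately show "Wop n i (Vop n j x) l = (if i = j then x else vzero) l"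
    by (cases "i = j") (simp_all add: Wop_def Vop_def vzero_def)
qed

lemma isometric_Vop:
  assumes "n > 0" shows "isometric_tuple ell2 n (Vop n)"
  unfolding isometric_tuple_def
  using bounded_Vop[OF assms] adjoint_Vop[OF assms] Wop_Vop[OF assms] Vop_ell2[OF assms] by simp


lemma Vop1_bas0: "n > 0 \<Longrightarrow> Vop n 1 (bas 0) = bas 0"
proof (rule ext)
  fix m assume n: "n > 0"
  have "(m mod n = 0 \<and> m div n = 0) = (m = 0)"
  proof
    assume h: "m mod n = 0 \<and> m div n = 0"
    have "m = m div n * n + m mod n" by simp
    thus "m = 0" using h by simp
  qed simp
  thus "Vop n 1 (bas 0) m = bas 0 m" by (auto simp: Vop_def bas_def)
qed

lemma bas_decomp:
  assumes "n > 0" shows "bas m = Vop n (m mod n + 1) (bas (m div n))"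
proof (rule ext)
  fix i
  have "(i mod n = m mod n \<and> i div n = m div n) = (i = m)"
    using div_mult_mod_eq[of i n] div_mult_mod_eq[of m n] by metis
  thus "bas m i = Vop n (m mod n + 1) (bas (m div n)) i" by (auto simp: Vop_def bas_def)
qed

lemma mod_k_range: "(n::nat) > 0 \<Longrightarrow> m mod n + 1 \<in> {1..n}"
  using mod_less_divisor[of n m] by (simp add: Suc_le_eq)

lemma div_less_self: "(n::nat) \<ge> 2 \<Longrightarrow> m \<ge> 1 \<Longrightarrow> m div n < m"
  by (rule div_less_dividend) auto

lemma Vop_scale: "Vop n k (\<lambda>i. c * y i) = (\<lambda>i. c * Vop n k y i)"
  by (rule ext) (simp add: Vop_def)

lemma fixed_V1:
  assumes n: "n \<ge> 2" and f: "Vop n 1 f = f"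
  shows "m \<ge> 1 \<Longrightarrow> f m = 0"
proof (induction m rule: less_induct)
  case (less m)
  have "f m = Vop n 1 f m" using f by simp
  also have "\<dots> = (if m mod n = 0 then f (m div n) else 0)" by (simp add: Vop_def)
  also have "\<dots> = 0"
  proof (cases "m mod n = 0")
    case True
    have "m div n \<ge> 1"
    proof (rule ccontr)
      assume "\<not> m div n \<ge> 1"
      hence "m div n = 0" by simp
      hence "m = 0" using True div_mult_mod_eq[of m n] by simp
      thus False using less.prems by simp
    qed
    moreover have "m div n < m" using less.prems n div_less_self by auto
    ultimately show ?thesis using less.IH True by simp
  qed simp
  finally show ?case .
qed

lemma trunc_ell2: "trunc N x \<in> ell2"
proof (induction N)
  case 0
  have "trunc 0 x = vzero" by (simp add: trunc_def vzero_def)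
  thus ?case by simp
next
  case (Suc N)
  have "trunc (Suc N) x = (\<lambda>i. 1 * trunc N x i + x N * bas N i)"
    by (rule ext) (auto simp: trunc_def bas_def less_Suc_eq)
  thus ?case using ell2_comb[OF Suc bas_ell2, of 1 "x N" N] by simp
qed

lemma cmod_le_vnorm: "y \<in> ell2 \<Longrightarrow> cmod (y j) \<le> vnorm y"
  unfolding vnorm_nsq using coord_bound[of y j] by (simp add: real_le_rsqrt)

lemma bounded_lin:
  assumes "bounded_op H A" "x \<in> H" "y \<in> H"
  shows "A (\<lambda>i. a * x i + b * y i) = (\<lambda>i. a * A x i + b * A y i)"
  using assms unfolding bounded_op_def by blast

lemma bounded_scale:
  assumes "bounded_op H A" "x \<in> H"
  shows "A (\<lambda>i. c * x i) = (\<lambda>i. c * A x i)"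
  using bounded_lin[OF assms assms(2), of c 0] by simp

lemma comm_scalar:
  assumes n: "n \<ge> 2" and A: "bounded_op ell2 A"
    and comm: "\<And>k x. k \<in> {1..n} \<Longrightarrow> x \<in> ell2 \<Longrightarrow> A (Vop n k x) = Vop n k (A x)"
  shows "\<exists>c. \<forall>x\<in>ell2. A x = (\<lambda>i. c * x i)"
proof -
  have n0: "n > 0" using n by simp
  have Aell: "\<And>x. x \<in> ell2 \<Longrightarrow> A x \<in> ell2" using A unfolding bounded_op_def by blast
  obtain C where C: "\<And>x. x \<in> ell2 \<Longrightarrow> vnorm (A x) \<le> C * vnorm x" using A unfolding bounded_op_def by blast
  define f where "f = A (bas 0)"
  have "Vop n 1 f = f" unfolding f_def using comm[of 1 "bas 0"] Vop1_bas0[OF n0] n by simp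
  hence fz: "\<And>m. m \<ge> 1 \<Longrightarrow> f m = 0" using fixed_V1[OF n] by blast
  define c where "c = f 0"
  have b0: "A (bas 0) = (\<lambda>i. c * bas 0 i)"
  proof (rule ext)
    fix i show "A (bas 0) i = c * bas 0 i"
      using fz[of i] by (cases "i = 0") (auto simp: f_def c_def bas_def)
  qed
  have bm: "A (bas m) = (\<lambda>i. c * bas m i)" for m
  proof (induction m rule: less_induct)
    case (less m)
    show ?case
    proof (cases "m = 0")
      case True thus ?thesis using b0 by simp
    next
      case False
      have lt: "m div n < m" using False n div_less_self by auto
      have "A (bas m) = A (Vop n (m mod n + 1) (bas (m div n)))" using bas_decomp[OF n0, of m] by (rule arg_cong[where f=A])
      also have "\<dots> = Vop n (m mod n + 1) (A (bas (m div n)))"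
        by (rule comm) (use mod_k_range[OF n0] in auto)
      also have "\<dots> = (\<lambda>i. c * Vop n (m mod n + 1) (bas (m div n)) i)"
        using less.IH[OF lt] by (simp add: Vop_scale)
      also have "\<dots> = (\<lambda>i. c * bas m i)" using bas_decomp[OF n0, of m] by simp
      finally show ?thesis .
    qed
  qed
  have tr: "A (trunc N x) = (\<lambda>i. c * trunc N x i)" for N x
  proof (induction N)
    case 0
    have z: "trunc 0 x = vzero" by (simp add: trunc_def vzero_def)
    have "A vzero = A (\<lambda>i. 0 * vzero i)" by (simp add: vzero_def)
    also have "\<dots> = (\<lambda>i. 0 * A vzero i)" by (rule bounded_scale[OF A]) simp
    finally show ?case using z by (simp add: vzero_def)
  next
    case (Suc N)
    have e: "trunc (Suc N) x = (\<lambda>i. 1 * trunc N x i + x N * bas N i)"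
      by (rule ext) (auto simp: trunc_def bas_def less_Suc_eq)
    have "A (trunc (Suc N) x) = (\<lambda>i. 1 * A (trunc N x) i + x N * A (bas N) i)"
      unfolding e by (rule bounded_lin[OF A trunc_ell2 bas_ell2])
    also have "\<dots> = (\<lambda>i. c * trunc (Suc N) x i)" unfolding Suc bm e by (simp add: algebra_simps)
    finally show ?case .
  qed
  have "A x = (\<lambda>i. c * x i)" if x: "x \<in> ell2" for x
  proof (rule ext)
    fix j
    define r where "r N = (\<lambda>i. x i - trunc N x i)" for N
    have rell: "r N \<in> ell2" for N unfolding r_def using ell2_comb[OF x trunc_ell2, of 1 "-1"] by simp
    have bound: "cmod (A x j - c * x j) \<le> (C + cmod c) * vnorm (r N)" for N
    proof -
      have xe: "x = (\<lambda>i. 1 * trunc N x i + 1 * r N i)" by (rule ext) (simp add: r_def)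
      have "A x = (\<lambda>i. 1 * A (trunc N x) i + 1 * A (r N) i)"
        by (subst xe, rule bounded_lin[OF A trunc_ell2 rell])
      hence "A x j - c * x j = A (r N) j - c * r N j" using tr[of N x] by (simp add: r_def algebra_simps)
      hence "cmod (A x j - c * x j) \<le> cmod (A (r N) j) + cmod c * cmod (r N j)"
        using norm_triangle_ineq4[of "A (r N) j" "c * r N j"] by (simp add: norm_mult)
      also have "\<dots> \<le> vnorm (A (r N)) + cmod c * vnorm (r N)"
        by (intro add_mono mult_left_mono cmod_le_vnorm Aell rell) auto
      also have "\<dots> \<le> C * vnorm (r N) + cmod c * vnorm (r N)" using C[OF rell] by simp
      finally show ?thesis by (simp add: algebra_simps)
    qed
    have "(\<lambda>N. vnorm (r N)) = (\<lambda>N. vnorm (\<lambda>i. trunc N x i - x i))"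
      unfolding r_def vnorm_def by (simp add: norm_minus_commute)
    hence "(\<lambda>N. vnorm (r N)) \<longlonglongrightarrow> 0" using trunc_conv[OF x] by simp
    hence "(\<lambda>N. (C + cmod c) * vnorm (r N)) \<longlonglongrightarrow> (C + cmod c) * 0" by (intro tendsto_mult tendsto_const)
    hence "cmod (A x j - c * x j) \<le> 0" using bound by (intro LIMSEQ_le_const) auto
    thus "A x j = c * x j" by simp
  qed
  thus ?thesis by blast
qed

lemma wstar_full:
  assumes n: "n \<ge> 2"
  shows "wstar_alg ell2 n (Vop n) = {T. bounded_op ell2 T}"
proof
  show "wstar_alg ell2 n (Vop n) \<subseteq> {T. bounded_op ell2 T}"
    unfolding wstar_alg_def commutant_def by blast
  show "{T. bounded_op ell2 T} \<subseteq> wstar_alg ell2 n (Vop n)"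
  proof
    fix T :: "nat vec \<Rightarrow> nat vec" assume T: "T \<in> {T. bounded_op ell2 T}"
    hence Tb: "bounded_op ell2 T" by simp
    have "\<forall>A\<in>commutant ell2 (Vop n ` {1..n} \<union> adjoint_op ell2 ` Vop n ` {1..n}). \<forall>x\<in>(ell2::nat vec set). T (A x) = A (T x)"
    proof (intro ballI)
      fix A and x :: "nat vec" assume A: "A \<in> commutant ell2 (Vop n ` {1..n} \<union> adjoint_op ell2 ` Vop n ` {1..n})" and x: "x \<in> ell2"
      have Ab: "bounded_op ell2 A" using A unfolding commutant_def by blast
      have "\<And>k y. k \<in> {1..n} \<Longrightarrow> y \<in> ell2 \<Longrightarrow> A (Vop n k y) = Vop n k (A y)"
        using A unfolding commutant_def by blast
      then obtain c where c: "\<forall>y\<in>ell2. A y = (\<lambda>i. c * y i)" using comm_scalar[OF n Ab] by blast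
      have Tx: "T x \<in> ell2" using Tb x unfolding bounded_op_def by blast
      show "T (A x) = A (T x)" using c x Tx bounded_scale[OF Tb x] by simp
    qed
    thus "T \<in> wstar_alg ell2 n (Vop n)" unfolding wstar_alg_def commutant_def using Tb by blast
  qed
qed


lemma word_op_Cons: "word_op A (i # w) = A i \<circ> word_op A w"
  by (simp add: word_op_def)

lemma word_op_Nil: "word_op A [] = id"
  by (simp add: word_op_def)

lemma pow_dvd_step:
  assumes "(n::nat) > 0"
  shows "(m mod n = 0 \<and> (m div n) mod n^s = 0) = (m mod n^Suc s = 0)"
proof (cases "n dvd m")
  case True
  then obtain q where q: "m = n * q" by blast
  have "m div n = q" using q assms by simp
  moreover have "(n * n^s dvd n * q) = (n^s dvd q)" using assms by simp
  ultimately show ?thesis using q by (simp add: dvd_eq_mod_eq_0[symmetric])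
next
  case False
  have d: "n dvd n^Suc s" by simp
  have "\<not> n^Suc s dvd m" using False dvd_trans[OF d] by blast
  thus ?thesis using False by (simp add: dvd_eq_mod_eq_0[symmetric])
qed

lemma Vop_pow_Suc:
  assumes "(n::nat) > 0"
  shows "Vop (n^Suc s) 1 x = Vop n 1 (Vop (n^s) 1 x)"
proof (rule ext)
  fix m
  have "m div n div n^s = m div n^Suc s" by (simp add: div_mult2_eq power_Suc)
  thus "Vop (n^Suc s) 1 x m = Vop n 1 (Vop (n^s) 1 x) m"
    using pow_dvd_step[OF assms, of m s] by (auto simp: Vop_def)
qed

lemma word_rep1:
  assumes "(n::nat) > 0"
  shows "word_op (Vop n) (replicate s 1) x = Vop (n^s) 1 x"
proof (induction s arbitrary: x)
  case 0
  show ?case by (rule ext) (simp add: word_op_Nil Vop_def)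
next
  case (Suc s)
  show ?case using Suc Vop_pow_Suc[OF assms, of s x] by (simp add: word_op_Cons)
qed

lemma inv_pow:
  assumes n: "(n::nat) > 0" and Mi: "invariant_sub ell2 n (Vop n) M" and x: "x \<in> M"
  shows "Vop (n^s) 1 x \<in> M"
proof (induction s)
  case 0
  have "Vop (n^0) 1 x = x" by (rule ext) (simp add: Vop_def)
  thus ?case using x by simp
next
  case (Suc s)
  have "1 \<in> {1..n}" using n by simp
  hence "Vop n 1 (Vop (n^s) 1 x) \<in> M" using Mi Suc unfolding invariant_sub_def by blast
  thus ?case using Vop_pow_Suc[OF n] by simp
qed

lemma pow_pos_in: "(n::nat) > 0 \<Longrightarrow> n^s > 0 \<and> (1::nat) \<in> {1..n^s}"
  by simp

lemma cs_sum:
  fixes K :: nat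
  assumes M: "closed_subspace H M" and f: "\<And>k. k < K \<Longrightarrow> f k \<in> M"
  shows "(\<lambda>i. \<Sum>k<K. c * f k i) \<in> M"
  using f
proof (induction K)
  case 0
  have "(\<lambda>i. \<Sum>k<0. c * f k i) = vzero" by (simp add: vzero_def)
  thus ?case using M unfolding closed_subspace_def by simp
next
  case (Suc K)
  have "(\<lambda>i. \<Sum>k<Suc K. c * f k i) = (\<lambda>i. 1 * (\<Sum>k<K. c * f k i) + c * f K i)" by simp
  moreover have "(\<lambda>i. \<Sum>k<K. c * f k i) \<in> M" using Suc by simp
  ultimately show ?case using closed_subspace_comb[OF M _ Suc.prems[of K], of "\<lambda>i. \<Sum>k<K. c * f k i" 1 c] by simp
qed

lemma cs_ell2: "closed_subspace ell2 ell2"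
  unfolding closed_subspace_def using ell2_comb by auto

lemma infsum_sum_fin:
  fixes f :: "'k \<Rightarrow> 'a \<Rightarrow> 'b::{topological_comm_monoid_add,t2_space}"
  assumes "finite F" "\<And>k. k \<in> F \<Longrightarrow> f k summable_on A"
  shows "(\<lambda>i. \<Sum>k\<in>F. f k i) summable_on A \<and> infsum (\<lambda>i. \<Sum>k\<in>F. f k i) A = (\<Sum>k\<in>F. infsum (f k) A)"
  using assms
proof (induction F rule: finite_induct)
  case empty thus ?case by simp
next
  case (insert k F)
  have sk: "f k summable_on A" using insert by simp
  have IH: "(\<lambda>i. \<Sum>k\<in>F. f k i) summable_on A \<and> infsum (\<lambda>i. \<Sum>k\<in>F. f k i) A = (\<Sum>k\<in>F. infsum (f k) A)"
    using insert by simp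
  have e: "(\<lambda>i. \<Sum>k\<in>insert k F. f k i) = (\<lambda>i. f k i + (\<Sum>k\<in>F. f k i))" using insert by simp
  have s1: "(\<lambda>i. \<Sum>k\<in>F. f k i) summable_on A" using IH by blast
  show ?case unfolding e
  proof
    show "(\<lambda>i. f k i + (\<Sum>k\<in>F. f k i)) summable_on A" by (rule summable_on_add[OF sk s1])
    show "infsum (\<lambda>i. f k i + (\<Sum>k\<in>F. f k i)) A = (\<Sum>k\<in>insert k F. infsum (f k) A)"
      using infsum_add[OF sk s1] IH insert by simp
  qed
qed

lemma sq_sum_disj:
  fixes g :: "nat \<Rightarrow> complex"
  assumes "finite F" "\<And>k k'. k \<in> F \<Longrightarrow> k' \<in> F \<Longrightarrow> g k \<noteq> 0 \<Longrightarrow> g k' \<noteq> 0 \<Longrightarrow> k = k'"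
  shows "(cmod (\<Sum>k\<in>F. g k))^2 = (\<Sum>k\<in>F. (cmod (g k))^2)"
proof (cases "\<exists>k0\<in>F. g k0 \<noteq> 0")
  case True
  then obtain k0 where k0: "k0 \<in> F" "g k0 \<noteq> 0" by blast
  have z: "\<And>k. k \<in> F - {k0} \<Longrightarrow> g k = 0" using assms(2) k0 by blast
  have "(\<Sum>k\<in>F. g k) = g k0 + (\<Sum>k\<in>F - {k0}. g k)" by (rule sum.remove[OF assms(1) k0(1)])
  also have "(\<Sum>k\<in>F - {k0}. g k) = 0" using z by simp
  moreover have "(\<Sum>k\<in>F. (cmod (g k))^2) = (cmod (g k0))^2 + (\<Sum>k\<in>F - {k0}. (cmod (g k))^2)"
    by (rule sum.remove[OF assms(1) k0(1)])
  moreover have "(\<Sum>k\<in>F - {k0}. (cmod (g k))^2) = 0" using z by simp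
  ultimately show ?thesis by simp
next
  case False thus ?thesis by simp
qed

lemma sep_pow:
  fixes n N q q' k k' :: nat
  assumes n: "n \<ge> 2" and q: "1 \<le> q" "q < N" and q': "1 \<le> q'"
    and eq: "q * n^(k*N) = q' * n^(k'*N)" and kk: "k < k'"
  shows False
proof -
  have "k' * N = k * N + (k' - k) * N" using kk by (simp add: algebra_simps)
  hence "n^(k'*N) = n^(k*N) * n^((k'-k)*N)" by (simp add: power_add)
  hence "q * n^(k*N) = (q' * n^((k'-k)*N)) * n^(k*N)" using eq by (simp add: algebra_simps)
  hence qe: "q = q' * n^((k'-k)*N)" using n by simp
  have "1 \<le> k'-k" using kk by simp
  hence "N \<le> (k'-k)*N" using mult_le_mono1[of 1 "k'-k" N] by simp
  hence "n^N \<le> n^((k'-k)*N)" using n by (simp add: power_increasing)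
  moreover have "N < 2^N" by (rule less_exp)
  moreover have "2^N \<le> n^N" using n by (simp add: power_mono)
  moreover have "n^((k'-k)*N) \<le> q" using qe q' by simp
  ultimately show False using q by linarith
qed


lemma restr_ell2: "x \<in> ell2 \<Longrightarrow> (\<lambda>i. if P i then x i else 0) \<in> ell2"
  unfolding ell2_iff by (rule summable_on_comparison_test) auto

lemma restr_nsq_le: "x \<in> ell2 \<Longrightarrow> nsq (\<lambda>i. if P i then x i else 0) \<le> nsq x"
  unfolding nsq_def
  by (rule infsum_mono) (use restr_ell2[of x P] in \<open>auto simp: ell2_iff\<close>)

lemma disj_Q:
  fixes xF :: "nat vec" and n N K k k' :: nat
  assumes n: "n \<ge> 2" and sup: "\<And>j. xF j \<noteq> 0 \<Longrightarrow> 1 \<le> j \<and> j < N"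
    and h1: "Vop (n^(k*N)) 1 xF i \<noteq> 0" and h2: "Vop (n^(k'*N)) 1 xF i \<noteq> 0"
  shows "k = k'"
proof -
  have gen: "\<exists>q. 1 \<le> q \<and> q < N \<and> i = q * n^(s*N)" if "Vop (n^(s*N)) 1 xF i \<noteq> 0" for s
  proof -
    have m: "i mod n^(s*N) = 0" and xq: "xF (i div n^(s*N)) \<noteq> 0"
      using that by (auto simp: Vop_def split: if_splits)
    have "i = i div n^(s*N) * n^(s*N) + i mod n^(s*N)" by (rule div_mult_mod_eq[symmetric])
    hence "i = i div n^(s*N) * n^(s*N)" using m by simp
    thus ?thesis using sup[OF xq] by blast
  qed
  obtain q where q: "1 \<le> q" "q < N" "i = q * n^(k*N)" using gen[OF h1] by blast
  obtain q' where q': "1 \<le> q'" "q' < N" "i = q' * n^(k'*N)" using gen[OF h2] by blast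
  show ?thesis
  proof (rule ccontr)
    assume "k \<noteq> k'"
    hence "k < k' \<or> k' < k" by linarith
    thus False
    proof
      assume "k < k'" thus False using sep_pow[OF n q(1,2) q'(1), of k k'] q(3) q'(3) by simp
    next
      assume "k' < k" thus False using sep_pow[OF n q'(1,2) q(1), of k' k] q(3) q'(3) by simp
    qed
  qed
qed

lemma ergodic_approx:
  assumes n: "n \<ge> 2" and Mi: "invariant_sub ell2 n (Vop n) M" and x: "x \<in> M" and e: "e > 0"
  shows "\<exists>a\<in>M. nsq (\<lambda>i. a i - x 0 * bas 0 i) \<le> e"
proof -
  have n0: "n > 0" using n by simp
  have Mc: "closed_subspace ell2 M" using Mi unfolding invariant_sub_def by blast
  have xe: "x \<in> ell2" using Mc x unfolding closed_subspace_def by blast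
  have sx: "(\<lambda>i. (cmod (x i))^2) summable_on UNIV" using xe unfolding ell2_iff .
  obtain N0 where N0: "\<forall>B. B \<subseteq> {N0..} \<longrightarrow> infsum (\<lambda>i. (cmod (x i))^2) B \<le> e/4"
    using tail_small_nat[OF sx, of "e/4"] e by auto
  define N where "N = Suc N0"
  obtain K :: nat where Kgt: "real K > 4 * nsq x / e" using reals_Archimedean2 by blast
  have "4 * nsq x / e \<ge> 0" using nsq_nonneg[of x] e by simp
  hence K0: "K > 0" using Kgt by (cases "K = 0") auto
  have KX: "nsq x / K \<le> e/4" using Kgt K0 e by (simp add: field_simps)
  define xF where "xF = (\<lambda>i. if 1 \<le> i \<and> i < N then x i else 0)"
  define r where "r = (\<lambda>i. if N \<le> i then x i else 0)"
  define Q where "Q = (\<lambda>(s::nat) y. Vop (n^s) 1 y)"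
  have Qf: "Q s y i = (if i mod n^s = 0 then y (i div n^s) else 0)" for s y i by (simp add: Q_def Vop_def)
  have Qell: "y \<in> ell2 \<Longrightarrow> Q s y \<in> ell2" for s y
    unfolding Q_def by (rule Vop_ell2) (use n0 in auto)
  have Qnsq: "nsq (Q s y) = nsq y" for s y
    unfolding Q_def by (rule nsq_Vop) (use n0 in auto)
  have Qb: "Q s (bas 0) i = bas 0 i" for s i
    unfolding Q_def using Vop1_bas0[of "n^s"] n0 by simp
  have xFe: "xF \<in> ell2" unfolding xF_def by (rule restr_ell2[OF xe])
  have re: "r \<in> ell2" unfolding r_def by (rule restr_ell2[OF xe])
  have decomp: "x j = x 0 * bas 0 j + xF j + r j" for j
    by (cases "j = 0") (auto simp: xF_def r_def bas_def N_def)
  have dec: "Q s x i = x 0 * bas 0 i + Q s xF i + Q s r i" for s i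
  proof -
    have b: "bas 0 i = (if i mod n^s = 0 then bas 0 (i div n^s) else 0)" using Qb[of s i] Qf[of s "bas 0" i] by simp
    show ?thesis using decomp[of "i div n^s"] unfolding Qf[of s x i] Qf[of s xF i] Qf[of s r i] b by simp
  qed
  define c where "c = 1 / complex_of_nat K"
  define a where "a = (\<lambda>i. \<Sum>k<K. c * Q (k*N) x i)"
  have aM: "a \<in> M" unfolding a_def Q_def by (rule cs_sum[OF Mc]) (rule inv_pow[OF n0 Mi x])
  define U where "U = (\<lambda>i. \<Sum>k<K. c * Q (k*N) xF i)"
  define R where "R = (\<lambda>i. \<Sum>k<K. c * Q (k*N) r i)"
  have diff: "(\<lambda>i. a i - x 0 * bas 0 i) = (\<lambda>i. U i + R i)"
  proof (rule ext)
    fix i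
    have "a i = (\<Sum>k<K. c * (x 0 * bas 0 i)) + U i + R i"
      unfolding a_def U_def R_def dec by (simp add: sum.distrib distrib_left)
    also have "(\<Sum>k<K. c * (x 0 * bas 0 i)) = x 0 * bas 0 i" using K0 by (simp add: c_def)
    finally show "a i - x 0 * bas 0 i = U i + R i" by simp
  qed
  have Ue: "U \<in> ell2" unfolding U_def by (rule cs_sum[OF cs_ell2]) (rule Qell[OF xFe])
  have Re: "R \<in> ell2" unfolding R_def by (rule cs_sum[OF cs_ell2]) (rule Qell[OF re])
  have sU: "(\<lambda>i. (cmod (U i))^2) summable_on UNIV" using Ue unfolding ell2_iff .
  have sR: "(\<lambda>i. (cmod (R i))^2) summable_on UNIV" using Re unfolding ell2_iff .
  have UR: "nsq (\<lambda>i. U i + R i) \<le> 2 * nsq U + 2 * nsq R"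
  proof -
    have "nsq (\<lambda>i. U i + R i) \<le> infsum (\<lambda>i. 2 * (cmod (U i))^2 + 2 * (cmod (R i))^2) UNIV"
      unfolding nsq_def
      by (rule infsum_mono) (use ell2_comb[OF Ue Re, of 1 1] sU sR sq_add_bound
          in \<open>auto simp: ell2_iff intro!: summable_on_add summable_on_cmult_right\<close>)
    also have "\<dots> = 2 * nsq U + 2 * nsq R"
      unfolding nsq_def using sU sR
      by (simp add: infsum_add summable_on_cmult_right infsum_cmult_right)
    finally show ?thesis .
  qed
  have cK: "cmod c = 1 / real K" by (simp add: c_def norm_divide)
  have sQr: "(\<lambda>i. (cmod (Q (k*N) r i))^2) summable_on UNIV" for k
    using Qell[OF re] unfolding ell2_iff .
  have Rpt: "(cmod (R i))^2 \<le> (1 / real K) * (\<Sum>k<K. (cmod (Q (k*N) r i))^2)" for i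
  proof -
    have "cmod (R i) \<le> (\<Sum>k<K. cmod (c * Q (k*N) r i))" unfolding R_def by (rule norm_sum)
    also have "\<dots> = (1 / real K) * (\<Sum>k<K. cmod (Q (k*N) r i))"
      by (simp add: norm_mult cK sum_distrib_left)
    finally have h1: "cmod (R i) \<le> (1 / real K) * (\<Sum>k<K. cmod (Q (k*N) r i))" .
    have "(cmod (R i))^2 \<le> ((1 / real K) * (\<Sum>k<K. cmod (Q (k*N) r i)))^2"
      using h1 by (simp add: power_mono)
    also have "\<dots> = (1 / real K)^2 * (\<Sum>k<K. 1 * cmod (Q (k*N) r i))^2" by (simp add: power_mult_distrib power_divide)
    also have "\<dots> \<le> (1 / real K)^2 * ((\<Sum>k<K. 1^2) * (\<Sum>k<K. (cmod (Q (k*N) r i))^2))"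
      by (rule mult_left_mono[OF Cauchy_Schwarz_ineq_sum]) simp
    also have "\<dots> = (1 / real K) * (\<Sum>k<K. (cmod (Q (k*N) r i))^2)"
      using K0 by (simp add: power2_eq_square)
    finally show ?thesis .
  qed
  have nR: "nsq R \<le> nsq r"
  proof -
    have S: "(\<lambda>i. \<Sum>k<K. (cmod (Q (k*N) r i))^2) summable_on UNIV \<and>
        infsum (\<lambda>i. \<Sum>k<K. (cmod (Q (k*N) r i))^2) UNIV = (\<Sum>k<K. infsum (\<lambda>i. (cmod (Q (k*N) r i))^2) UNIV)"
      by (rule infsum_sum_fin) (use sQr in auto)
    have "nsq R \<le> infsum (\<lambda>i. (1 / real K) * (\<Sum>k<K. (cmod (Q (k*N) r i))^2)) UNIV"
      unfolding nsq_def
    proof (rule infsum_mono[OF sR])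
      show "(\<lambda>i. (1 / real K) * (\<Sum>k<K. (cmod (Q (k*N) r i))^2)) summable_on UNIV"
        by (rule summable_on_cmult_right) (use S in blast)
    qed (rule Rpt)
    also have "\<dots> = (1 / real K) * (\<Sum>k<K. nsq (Q (k*N) r))"
      using infsum_cmult_right[of "1 / real K" "\<lambda>i. \<Sum>k<K. (cmod (Q (k*N) r i))^2" UNIV] S
      by (simp add: nsq_def)
    also have "\<dots> = nsq r" using K0 by (simp add: Qnsq)
    finally show ?thesis .
  qed
  have nr: "nsq r \<le> e/4"
  proof -
    have "nsq r = infsum (\<lambda>i. (cmod (x i))^2) {N..}"
      unfolding r_def using nsq_restrict[of "{N..}" x] by simp
    also have "\<dots> \<le> e/4" using N0 N_def by auto
    finally show ?thesis .
  qed
  have sQF: "(\<lambda>i. (cmod (Q (k*N) xF i))^2) summable_on UNIV" for k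
    using Qell[OF xFe] unfolding ell2_iff .
  have supF: "\<And>j. xF j \<noteq> 0 \<Longrightarrow> 1 \<le> j \<and> j < N" by (auto simp: xF_def split: if_splits)
  have Upt: "(cmod (U i))^2 = (1 / real K)^2 * (\<Sum>k<K. (cmod (Q (k*N) xF i))^2)" for i
  proof -
    have "(cmod (U i))^2 = (\<Sum>k<K. (cmod (c * Q (k*N) xF i))^2)"
      unfolding U_def
    proof (rule sq_sum_disj)
      fix k k' assume "k \<in> {..<K}" "k' \<in> {..<K}" "c * Q (k * N) xF i \<noteq> 0" "c * Q (k' * N) xF i \<noteq> 0"
      thus "k = k'" using disj_Q[OF n supF, where k=k and k'=k' and i=i] by (simp add: Q_def)
    qed simp
    also have "\<dots> = (1 / real K)^2 * (\<Sum>k<K. (cmod (Q (k*N) xF i))^2)"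
      by (simp add: norm_mult cK power_mult_distrib sum_distrib_left power_divide)
    finally show ?thesis .
  qed
  have nU: "nsq U \<le> nsq x / K"
  proof -
    have S: "(\<lambda>i. \<Sum>k<K. (cmod (Q (k*N) xF i))^2) summable_on UNIV \<and>
        infsum (\<lambda>i. \<Sum>k<K. (cmod (Q (k*N) xF i))^2) UNIV = (\<Sum>k<K. infsum (\<lambda>i. (cmod (Q (k*N) xF i))^2) UNIV)"
      by (rule infsum_sum_fin) (use sQF in auto)
    have "nsq U = infsum (\<lambda>i. (1 / real K)^2 * (\<Sum>k<K. (cmod (Q (k*N) xF i))^2)) UNIV"
      unfolding nsq_def Upt ..
    also have "\<dots> = (1 / real K)^2 * (\<Sum>k<K. nsq (Q (k*N) xF))"
      using S by (simp add: infsum_cmult_right nsq_def)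
    also have "\<dots> = nsq xF / K" using K0 by (simp add: Qnsq power2_eq_square)
    also have "\<dots> \<le> nsq x / K" unfolding xF_def
      by (rule divide_right_mono[OF restr_nsq_le[OF xe]]) simp
    finally show ?thesis .
  qed
  have "nsq (\<lambda>i. a i - x 0 * bas 0 i) \<le> e"
    unfolding diff using UR nU nR nr KX by linarith
  thus ?thesis using aM by blast
qed


lemma bas_all_in:
  assumes n: "n \<ge> 2" and Mi: "invariant_sub ell2 n (Vop n) M" and b0: "bas 0 \<in> M"
  shows "M = ell2"
proof -
  have n0: "n > 0" using n by simp
  have Mc: "closed_subspace ell2 M" using Mi unfolding invariant_sub_def by blast
  have "bas m \<in> M" for m
  proof (induction m rule: less_induct)
    case (less m)
    show ?case
    proof (cases "m = 0")
      case True thus ?thesis using b0 by simp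
    next
      case False
      have lt: "m div n < m" using False n div_less_self by auto
      have k: "m mod n + 1 \<in> {1..n}" by (rule mod_k_range[OF n0])
      have "Vop n (m mod n + 1) (bas (m div n)) \<in> M"
        using Mi less.IH[OF lt] k unfolding invariant_sub_def by blast
      thus ?thesis using bas_decomp[OF n0, of m] by simp
    qed
  qed
  thus ?thesis by (rule closed_subspace_full[OF Mc])
qed

lemma e0_in:
  assumes n: "n \<ge> 2" and Mi: "invariant_sub ell2 n (Vop n) M" and x: "x \<in> M" and x0: "x 0 \<noteq> 0"
  shows "bas 0 \<in> M"
proof -
  have Mc: "closed_subspace ell2 M" using Mi unfolding invariant_sub_def by blast
  define y :: "nat vec" where "y = (\<lambda>i. x 0 * bas 0 i)"
  have "\<forall>j. \<exists>a. a \<in> M \<and> nsq (\<lambda>i. a i - y i) \<le> inverse (real (Suc j))"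
  proof
    fix j
    have "inverse (real (Suc j)) > 0" by simp
    from ergodic_approx[OF n Mi x this] show "\<exists>a. a \<in> M \<and> nsq (\<lambda>i. a i - y i) \<le> inverse (real (Suc j))"
      unfolding y_def by blast
  qed
  then obtain s where s: "\<And>j. s j \<in> M" "\<And>j. nsq (\<lambda>i. s j i - y i) \<le> inverse (real (Suc j))"
    by metis
  have lim0: "(\<lambda>j. sqrt (inverse (real (Suc j)))) \<longlonglongrightarrow> 0"
    using tendsto_real_sqrt[OF LIMSEQ_inverse_real_of_nat] by simp
  have "(\<lambda>j. vnorm (\<lambda>i. s j i - y i)) \<longlonglongrightarrow> 0"
  proof (rule real_tendsto_sandwich[OF _ _ tendsto_const lim0])
    show "\<forall>\<^sub>F j in sequentially. 0 \<le> vnorm (\<lambda>i. s j i - y i)" by (simp add: vnorm_nsq nsq_nonneg)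
    show "\<forall>\<^sub>F j in sequentially. vnorm (\<lambda>i. s j i - y i) \<le> sqrt (inverse (real (Suc j)))"
      using s(2) by (simp add: vnorm_nsq)
  qed
  moreover have "y \<in> ell2" unfolding y_def using ell2_comb[OF bas_ell2 bas_ell2, of "x 0" 0 0 0] by simp
  ultimately have yM: "y \<in> M" using Mc s(1) unfolding closed_subspace_def by blast
  have "(\<lambda>i. inverse (x 0) * y i) \<in> M" by (rule closed_subspace_scale[OF Mc yM])
  moreover have "(\<lambda>i. inverse (x 0) * y i) = bas 0" using x0 by (auto simp: y_def)
  ultimately show ?thesis by simp
qed

lemma reducing_trivial:
  assumes n: "n \<ge> 2" and R: "reducing_sub ell2 n (Vop n) M" and ne: "M \<noteq> {vzero}"
  shows "M = ell2"
proof (cases "\<exists>x\<in>M. x 0 \<noteq> 0")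
  case True
  then obtain x where "x \<in> M" "x 0 \<noteq> 0" by blast
  have Mi: "invariant_sub ell2 n (Vop n) M" using R unfolding reducing_sub_def by blast
  show ?thesis by (rule bas_all_in[OF n Mi e0_in[OF n Mi \<open>x \<in> M\<close> \<open>x 0 \<noteq> 0\<close>]])
next
  case False
  have Oi: "invariant_sub ell2 n (Vop n) (ortho_compl ell2 M)" using R unfolding reducing_sub_def by blast
  have Mc: "closed_subspace ell2 M" using R unfolding reducing_sub_def invariant_sub_def by blast
  have "bas 0 \<in> ortho_compl ell2 M" using False unfolding ortho_compl_def by (simp add: vinner_bas_right)
  hence O: "ortho_compl ell2 M = ell2" by (rule bas_all_in[OF n Oi])
  have "x = vzero" if xM: "x \<in> M" for x
  proof -
    have xe: "x \<in> ell2" using Mc xM unfolding closed_subspace_def by blast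
    hence "x \<in> ortho_compl ell2 M" using O by simp
    hence "vinner x x = 0" using xM unfolding ortho_compl_def by blast
    hence "nsq x = 0" by (simp add: vinner_self)
    thus ?thesis by (rule nsq_zero_imp[OF xe])
  qed
  moreover have "vzero \<in> M" using Mc unfolding closed_subspace_def by blast
  ultimately have "M = {vzero}" by blast
  thus ?thesis using ne by simp
qed


definition Tk :: "nat \<Rightarrow> (nat list, nat list) op" where
  "Tk k x = (\<lambda>u. if k \<le> length u \<and> take k u = replicate k 1 then x (drop k u) else 0)"

lemma word_Tk: "word_op Lcre (replicate k 1) = Tk k"
proof (induction k)
  case 0
  show ?case by (rule ext) (simp add: word_op_Nil Tk_def)
next
  case (Suc k)
  show ?case
  proof (rule ext, rule ext)
    fix x u
    have "word_op Lcre (replicate (Suc k) 1) x = Lcre 1 (Tk k x)"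
      by (simp only: replicate_Suc word_op_Cons Suc.IH o_apply)
    thus "word_op Lcre (replicate (Suc k) 1) x u = Tk (Suc k) x u"
      by (cases u) (auto simp: Lcre_def Tk_def)
  qed
qed

lemma Tk_at: "Tk k x (replicate k 1 @ w) = x w"
  by (simp add: Tk_def)

lemma Tk_out: "u \<notin> range (\<lambda>w. replicate k 1 @ w) \<Longrightarrow> Tk k x u = 0"
proof (rule ccontr)
  assume a: "u \<notin> range (\<lambda>w. replicate k 1 @ w)" "Tk k x u \<noteq> 0"
  hence "k \<le> length u" "take k u = replicate k 1" by (auto simp: Tk_def split: if_splits)
  hence "u = replicate k 1 @ drop k u" by (metis append_take_drop_id)
  thus False using a(1) by blast
qed

lemma reindex_Tk:
  assumes "\<And>u. f 0 u = 0"
  shows "infsum (\<lambda>u. f (Tk k x u) u) UNIV = infsum (\<lambda>w. f (x w) (replicate k 1 @ w)) UNIV"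
    and "(\<lambda>u. f (Tk k x u) u) summable_on UNIV \<longleftrightarrow> (\<lambda>w. f (x w) (replicate k 1 @ w)) summable_on UNIV"
proof -
  let ?g = "\<lambda>w. replicate k 1 @ w"
  have inj: "inj ?g" by (auto simp: inj_def)
  have z: "\<And>u. u \<in> UNIV - range ?g \<Longrightarrow> f (Tk k x u) u = 0"
    using Tk_out assms by auto
  have "infsum (\<lambda>u. f (Tk k x u) u) UNIV = infsum (\<lambda>u. f (Tk k x u) u) (range ?g)"
    by (rule infsum_cong_neutral) (use z in auto)
  also have "\<dots> = infsum ((\<lambda>u. f (Tk k x u) u) \<circ> ?g) UNIV"
    by (rule infsum_reindex[OF inj])
  also have "\<dots> = infsum (\<lambda>w. f (x w) (replicate k 1 @ w)) UNIV"
    by (simp only: o_def Tk_at)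
  finally show "infsum (\<lambda>u. f (Tk k x u) u) UNIV = infsum (\<lambda>w. f (x w) (replicate k 1 @ w)) UNIV" .
  have "(\<lambda>u. f (Tk k x u) u) summable_on UNIV \<longleftrightarrow> (\<lambda>u. f (Tk k x u) u) summable_on (range ?g)"
    by (rule summable_on_cong_neutral) (use z in auto)
  also have "\<dots> \<longleftrightarrow> ((\<lambda>u. f (Tk k x u) u) \<circ> ?g) summable_on UNIV"
    by (rule summable_on_reindex[OF inj])
  also have "\<dots> \<longleftrightarrow> (\<lambda>w. f (x w) (replicate k 1 @ w)) summable_on UNIV"
    by (simp only: o_def Tk_at)
  finally show "(\<lambda>u. f (Tk k x u) u) summable_on UNIV \<longleftrightarrow> (\<lambda>w. f (x w) (replicate k 1 @ w)) summable_on UNIV" .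
qed

lemma Tk_ell2: "x \<in> ell2 \<Longrightarrow> Tk k x \<in> ell2"
  using reindex_Tk(2)[where f="\<lambda>v u. (cmod v)^2" and x=x and k=k] unfolding ell2_iff by simp

lemma nsq_Tk: "nsq (Tk k x) = nsq x"
  using reindex_Tk(1)[where f="\<lambda>v u. (cmod v)^2" and x=x and k=k] unfolding nsq_def by simp

lemma Tk_fock:
  assumes "n \<ge> 1" "x \<in> fock n" shows "Tk k x \<in> fock n"
proof -
  have "Tk k x \<in> ell2" using assms Tk_ell2 unfolding fock_def by blast
  moreover have "u \<in> words n" if "Tk k x u \<noteq> 0" for u
  proof -
    have h: "k \<le> length u" "take k u = replicate k 1" "x (drop k u) \<noteq> 0"
      using that by (auto simp: Tk_def split: if_splits)
    have "drop k u \<in> words n" using h(3) assms(2) unfolding fock_def by blast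
    moreover have "set (take k u) \<subseteq> {1..n}" using h(2) assms(1) by (auto simp: set_replicate_conv_if)
    ultimately show ?thesis unfolding words_def using set_append[of "take k u" "drop k u"]
      by (metis append_take_drop_id le_sup_iff mem_Collect_eq)
  qed
  ultimately show ?thesis unfolding fock_def by blast
qed

lemma fock_ell2: "x \<in> fock n \<Longrightarrow> x \<in> ell2"
  unfolding fock_def by blast

lemma bounded_Tk:
  assumes "n \<ge> 1" shows "bounded_op (fock n) (Tk k)"
  unfolding bounded_op_def
proof (intro conjI ballI allI exI)
  show "\<And>x. x \<in> fock n \<Longrightarrow> Tk k x \<in> fock n" using Tk_fock[OF assms] by blast
  show "\<And>x y a b. Tk k (\<lambda>i. a * x i + b * y i) = (\<lambda>i. a * Tk k x i + b * Tk k y i)"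
    by (rule ext) (simp add: Tk_def)
  show "\<And>x. vnorm (Tk k x) \<le> 1 * vnorm x" by (simp add: vnorm_nsq nsq_Tk)
qed

definition Zop :: "('a, 'a) op" where "Zop = (\<lambda>y u. 0)"

lemma vzero_fock[simp]: "vzero \<in> fock n"
  unfolding fock_def using vzero_ell2 by (auto simp: vzero_def)

lemma topspace_wot_fock: "topspace (wot (fock n)) = UNIV"
proof -
  have "UNIV \<in> {{T. vinner (T x) y \<in> U} | x y U. x \<in> fock n \<and> y \<in> fock n \<and> open U}"
    by (intro CollectI exI[of _ vzero] exI[of _ UNIV]) auto
  thus ?thesis unfolding wot_def by auto
qed

lemma poly_in_Ln: "bounded_op (fock n) T \<Longrightarrow> T \<in> poly_ops n \<Longrightarrow> T \<in> Ln n"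
  unfolding Ln_def using closure_of_subset[of "poly_ops n" "wot (fock n)"] topspace_wot_fock by auto

lemma Tk_Ln: assumes "n \<ge> 1" shows "Tk k \<in> Ln n"
proof (rule poly_in_Ln[OF bounded_Tk[OF assms]])
  have w: "replicate k 1 \<in> words n" using assms by (auto simp: words_def set_replicate_conv_if)
  show "Tk k \<in> poly_ops n" unfolding poly_ops_def
    by (intro CollectI exI[of _ "{replicate k 1}"] exI[of _ "\<lambda>_. 1"]) (use w word_Tk[of k, unfolded One_nat_def] in \<open>simp\<close>)
qed

lemma Zop_Ln: "Zop \<in> Ln n"
proof (rule poly_in_Ln)
  show "bounded_op (fock n) Zop" unfolding bounded_op_def
    using vzero_fock[of n] by (intro conjI ballI allI exI[of _ 0]) (auto simp: Zop_def vnorm_nsq vzero_def nsq_def)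
  show "Zop \<in> poly_ops n" unfolding poly_ops_def
    by (intro CollectI exI[of _ "{}"] exI[of _ "\<lambda>_. 1"]) (simp add: Zop_def)
qed

lemma limitin_gen:
  assumes "l \<in> \<Union>S" "\<And>s. s \<in> S \<Longrightarrow> l \<in> s \<Longrightarrow> eventually (\<lambda>x. f x \<in> s) F"
  shows "limitin (topology_generated_by S) f l F"
  unfolding limitin_def
proof (intro conjI allI impI)
  show "l \<in> topspace (topology_generated_by S)" using assms(1) by simp
  fix U assume "openin (topology_generated_by S) U \<and> l \<in> U"
  hence g: "generate_topology_on S U" and lU: "l \<in> U" by (auto simp: openin_topology_generated_by_iff)
  from g lU show "eventually (\<lambda>x. f x \<in> U) F"
  proof (induction rule: generate_topology_on.induct)
    case Empty thus ?case by simp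
  next
    case (Int a b) thus ?case by (auto elim: eventually_elim2)
  next
    case (UN K)
    then obtain k where "k \<in> K" "l \<in> k" by blast
    with UN.IH have "eventually (\<lambda>x. f x \<in> k) F" by blast
    thus ?case using \<open>k \<in> K\<close> by (auto elim: eventually_mono)
  next
    case (Basis s) thus ?case using assms(2) by blast
  qed
qed

lemma restrict_nsq_small:
  fixes y :: "'a vec"
  assumes "y \<in> ell2" "d > 0"
  shows "\<exists>F. finite F \<and> (\<forall>B. B \<inter> F = {} \<longrightarrow> nsq (\<lambda>i. if i \<in> B then y i else 0) \<le> d)"
  using tail_small[of "\<lambda>i. (cmod (y i))^2" d] assms unfolding ell2_iff by (simp add: nsq_restrict)

lemma wot_Tk:
  assumes x: "x \<in> ell2" and y: "y \<in> ell2"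
  shows "(\<lambda>k. vinner (Tk k x) y) \<longlonglongrightarrow> 0"
proof (rule LIMSEQ_I)
  fix r :: real assume r: "r > 0"
  define e where "e = r / (nsq x + 1)"
  have e0: "e > 0" using r nsq_nonneg[of x] by (simp add: e_def)
  have ex: "e * nsq x < r" using r nsq_nonneg[of x] by (simp add: e_def field_simps)
  obtain F where F: "finite F" "\<forall>B. B \<inter> F = {} \<longrightarrow> nsq (\<lambda>i. if i \<in> B then y i else 0) \<le> e * r / 2"
    using restrict_nsq_small[OF y, of "e * r / 2"] e0 r by auto
  obtain L where L: "\<forall>u\<in>F. length u < L"
  proof -
    have "finite (length ` F)" using F(1) by simp
    then obtain L where "\<forall>m\<in>length ` F. m < L" using finite_nat_bounded by (metis lessThan_iff subsetD)
    thus ?thesis using that by auto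
  qed
  have "cmod (vinner (Tk k x) y - 0) < r" if k: "k \<ge> L" for k
  proof -
    define B :: "nat list set" where "B = {u. k \<le> length u}"
    define yB where "yB = (\<lambda>i. if i \<in> B then y i else 0)"
    have BF: "B \<inter> F = {}" using L k by (auto simp: B_def)
    have yBe: "yB \<in> ell2" unfolding yB_def by (rule restr_ell2[OF y])
    have "vinner (Tk k x) y = vinner (Tk k x) yB"
      unfolding vinner_def yB_def B_def by (rule infsum_cong) (auto simp: Tk_def)
    hence "cmod (vinner (Tk k x) y) \<le> (e * nsq (Tk k x) + nsq yB / e) / 2"
      using vinner_bound_eps[OF Tk_ell2[OF x] yBe e0] by simp
    also have "\<dots> \<le> (e * nsq x + r / 2) / 2"
    proof -
      have "nsq yB \<le> e * r / 2" using F(2) BF unfolding yB_def by blast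
      hence "nsq yB \<le> r / 2 * e" by (simp add: algebra_simps)
      hence "nsq yB / e \<le> r / 2" using pos_divide_le_eq[OF e0] by blast
      thus ?thesis by (simp add: nsq_Tk)
    qed
    also have "\<dots> < r" using ex e0 r by (simp add: field_simps)
    finally show ?thesis by simp
  qed
  thus "\<exists>no. \<forall>k\<ge>no. norm (vinner (Tk k x) y - 0) < r" by blast
qed


lemma vinner_zero_left[simp]: "vinner (\<lambda>u. 0) y = 0"
  by (simp add: vinner_def)

lemma vinner_vzero_left[simp]: "vinner vzero y = 0"
  by (simp add: vinner_def vzero_def)

lemma Tk_limit:
  assumes n: "n \<ge> 1"
  shows "limitin (wstar_top (fock n)) Tk Zop sequentially"
  unfolding wstar_top_def
proof (rule limitin_gen)
  let ?S = "{{T. (\<Sum>k. vinner (T (xs k)) (ys k)) \<in> U} | xs ys U.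
        (\<forall>k. xs k \<in> fock n \<and> ys k \<in> fock n) \<and> summable (\<lambda>k. (vnorm (xs k))^2)
        \<and> summable (\<lambda>k. (vnorm (ys k))^2) \<and> open U}"
  have "UNIV \<in> ?S"
    by (intro CollectI exI[of _ "\<lambda>_. vzero"] exI[of _ UNIV]) (auto simp: vnorm_nsq)
  thus "Zop \<in> \<Union>?S" by blast
  fix s assume s: "s \<in> ?S" and Zs: "Zop \<in> s"
  then obtain xs ys U where sdef: "s = {T. (\<Sum>k. vinner (T (xs k)) (ys k)) \<in> U}"
    and xs: "\<And>k. xs k \<in> fock n" and ys: "\<And>k. ys k \<in> fock n"
    and sx: "summable (\<lambda>k. (vnorm (xs k))^2)" and sy: "summable (\<lambda>k. (vnorm (ys k))^2)" and U: "open U"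
    by blast
  have xe: "\<And>k. xs k \<in> ell2" and ye: "\<And>k. ys k \<in> ell2" using xs ys fock_ell2 by blast+
  have "0 \<in> U" using Zs unfolding sdef by (simp add: Zop_def)
  define M where "M j = (nsq (xs j) + nsq (ys j)) / 2" for j
  have sM: "summable M" unfolding M_def using summable_add[OF sx sy]
    by (intro summable_divide) (simp add: vnorm_sq)
  have T: "eventually (\<lambda>k. summable (\<lambda>j. norm (vinner (Tk k (xs j)) (ys j)))) sequentially \<and>
           summable (\<lambda>j. norm ((\<lambda>j. 0::complex) j)) \<and>
           ((\<lambda>k. suminf (\<lambda>j. vinner (Tk k (xs j)) (ys j))) \<longlongrightarrow> suminf (\<lambda>j. 0::complex)) sequentially"
  proof (rule tannerys_theorem[where M=M])
    show "\<And>j. ((\<lambda>k. vinner (Tk k (xs j)) (ys j)) \<longlongrightarrow> 0) sequentially"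
      using wot_Tk[OF xe ye] by blast
    show "\<forall>\<^sub>F (j, k) in sequentially \<times>\<^sub>F sequentially. norm (vinner (Tk k (xs j)) (ys j)) \<le> M j"
    proof (rule always_eventually, clarify)
      fix j k
      show "norm (vinner (Tk k (xs j)) (ys j)) \<le> M j"
        using vinner_bound_eps[OF Tk_ell2[OF xe[of j], where k=k] ye[of j], where e=1] by (simp add: M_def nsq_Tk)
    qed
  qed (use sM in auto)
  hence "((\<lambda>k. \<Sum>j. vinner (Tk k (xs j)) (ys j)) \<longlongrightarrow> 0) sequentially" by simp
  from topological_tendstoD[OF this U \<open>0 \<in> U\<close>]
  show "eventually (\<lambda>k. Tk k \<in> s) sequentially" unfolding sdef by simp
qed

lemma not_abs_cont:
  assumes n: "n \<ge> 2"
  shows "\<not> abs_cont n (ell2 :: nat vec set) (Vop n)"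
proof
  assume "abs_cont n (ell2 :: nat vec set) (Vop n)"
  then obtain \<Phi> :: "(nat list, nat list) op \<Rightarrow> (nat, nat) op" where
    w': "\<forall>w\<in>words n. \<forall>x\<in>(ell2::nat vec set). \<Phi> (word_op Lcre w) x = word_op (Vop n) w x"
    and lin': "\<forall>S\<in>Ln n. \<forall>T\<in>Ln n. \<forall>a b. \<forall>x\<in>(ell2::nat vec set).
          \<Phi> (\<lambda>y u. a * S y u + b * T y u) x = (\<lambda>u. a * \<Phi> S x u + b * \<Phi> T x u)"
    and cont: "continuous_map (subtopology (wstar_top (fock n)) (Ln n)) (wstar_top (ell2::nat vec set)) \<Phi>"
    unfolding abs_cont_def by blast
  have w: "\<And>w x. w \<in> words n \<Longrightarrow> x \<in> ell2 \<Longrightarrow> \<Phi> (word_op Lcre w) x = word_op (Vop n) w x"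
    using w' by blast
  have lin: "\<And>S T a b x. S \<in> Ln n \<Longrightarrow> T \<in> Ln n \<Longrightarrow> x \<in> ell2 \<Longrightarrow>
          \<Phi> (\<lambda>y u. a * S y u + b * T y u) x = (\<lambda>u. a * \<Phi> S x u + b * \<Phi> T x u)"
    using lin' by blast
  have n1: "n \<ge> 1" and n0: "n > 0" using n by auto
  have lim1: "limitin (subtopology (wstar_top (fock n)) (Ln n)) Tk Zop sequentially"
    unfolding limitin_subtopology using Zop_Ln Tk_Ln[OF n1] Tk_limit[OF n1] by simp
  have lim2: "limitin (wstar_top ell2) (\<Phi> \<circ> Tk) (\<Phi> Zop) sequentially"
    by (rule continuous_map_limit[OF cont lim1])
  have PZ: "\<Phi> Zop x = (\<lambda>u. 0)" if "x \<in> ell2" for x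
  proof -
    have "(\<lambda>y u. 0 * Zop y u + 0 * Zop y u) = (Zop :: (nat list, nat list) op)" by (simp add: Zop_def)
    hence "\<Phi> Zop x = \<Phi> (\<lambda>y u. 0 * Zop y u + 0 * Zop y u) x" by simp
    also have "\<dots> = (\<lambda>u. 0 * \<Phi> Zop x u + 0 * \<Phi> Zop x u)" by (rule lin[OF Zop_Ln Zop_Ln that])
    finally show ?thesis by simp
  qed
  have rw: "replicate k 1 \<in> words n" for k using n1 by (auto simp: words_def set_replicate_conv_if)
  have PT: "\<Phi> (Tk k) x = Vop (n^k) 1 x" if "x \<in> ell2" for k x
  proof -
    have "\<Phi> (word_op Lcre (replicate k 1)) x = word_op (Vop n) (replicate k 1) x" by (rule w[OF rw that])
    thus ?thesis unfolding word_Tk word_rep1[OF n0] .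
  qed
  define xs :: "nat \<Rightarrow> nat vec" where "xs j = (if j = 0 then bas 0 else vzero)" for j
  have xse: "xs j \<in> ell2" for j by (simp add: xs_def)
  let ?O = "{A :: (nat, nat) op. (\<Sum>j. vinner (A (xs j)) (xs j)) \<in> ball 0 (1/2)}"
  have sxs: "summable (\<lambda>j. (vnorm (xs j))^2)"
    by (rule summable_finite[of "{0}"]) (auto simp: xs_def vnorm_nsq)
  have "openin (wstar_top ell2) ?O" unfolding wstar_top_def
    by (rule topology_generated_by_Basis)
       (intro CollectI exI[of _ xs] exI[of _ "ball 0 (1/2)"], use xse sxs in auto)
  moreover have "\<Phi> Zop \<in> ?O" using PZ[OF xse] by simp
  ultimately have ev: "eventually (\<lambda>k. (\<Phi> \<circ> Tk) k \<in> ?O) sequentially" by (rule limitinD[OF lim2])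
  have one: "(\<Sum>j. vinner (\<Phi> (Tk k) (xs j)) (xs j)) = 1" for k
  proof -
    have "(\<Sum>j. vinner (\<Phi> (Tk k) (xs j)) (xs j)) = (\<Sum>j\<in>{0}. vinner (\<Phi> (Tk k) (xs j)) (xs j))"
      by (rule suminf_finite) (auto simp: xs_def PT)
    also have "\<dots> = vinner (\<Phi> (Tk k) (bas 0)) (bas 0)" by (simp add: xs_def)
    also have "\<Phi> (Tk k) (bas 0) = bas 0" using PT[OF bas_ell2, of k] Vop1_bas0[of "n^k"] n0 by simp
    also have "vinner (bas 0) (bas (0::nat)) = 1" unfolding vinner_bas_left by (simp add: bas_def)
    finally show ?thesis .
  qed
  from ev have "eventually (\<lambda>k. False) sequentially" by (simp add: one)
  thus False by simp
qed


lemma reindex_gen: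
  assumes inj: "inj_on g A" and z: "\<And>u. u \<notin> g ` A \<Longrightarrow> F u = 0"
  shows "infsum F UNIV = infsum (F \<circ> g) A" and "F summable_on UNIV \<longleftrightarrow> (F \<circ> g) summable_on A"
proof -
  have "infsum F UNIV = infsum F (g ` A)" by (rule infsum_cong_neutral) (use z in auto)
  also have "\<dots> = infsum (F \<circ> g) A" by (rule infsum_reindex[OF inj])
  finally show "infsum F UNIV = infsum (F \<circ> g) A" .
  have "F summable_on UNIV \<longleftrightarrow> F summable_on (g ` A)" by (rule summable_on_cong_neutral) (use z in auto)
  also have "\<dots> \<longleftrightarrow> (F \<circ> g) summable_on A" by (rule summable_on_reindex[OF inj])
  finally show "F summable_on UNIV \<longleftrightarrow> (F \<circ> g) summable_on A" .
qed

lemma fock_zero: "f \<in> fock n \<Longrightarrow> w \<notin> words n \<Longrightarrow> f w = 0"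
  unfolding fock_def by blast

lemma words_Cons: "(i # w \<in> words n) = (i \<in> {1..n} \<and> w \<in> words n)"
  by (auto simp: words_def)

lemma Lcre_fock:
  assumes i: "i \<in> {1..n}" and f: "f \<in> fock n" shows "Lcre i f \<in> fock n" and "nsq (Lcre i f) = nsq f"
proof -
  let ?g = "\<lambda>w. i # (w::nat list)"
  have inj: "inj_on ?g UNIV" by (auto simp: inj_on_def)
  have z: "\<And>u. u \<notin> ?g ` UNIV \<Longrightarrow> (\<lambda>u. (cmod (Lcre i f u))^2) u = 0"
  proof -
    fix u assume "u \<notin> ?g ` UNIV"
    hence "\<not> (u \<noteq> [] \<and> hd u = i)" by (metis list.collapse rangeI)
    thus "(\<lambda>u. (cmod (Lcre i f u))^2) u = 0" unfolding Lcre_def by auto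
  qed
  have c: "(\<lambda>u. (cmod (Lcre i f u))^2) \<circ> ?g = (\<lambda>w. (cmod (f w))^2)" by (rule ext) (simp add: Lcre_def)
  have fe: "f \<in> ell2" using f by (rule fock_ell2)
  have "Lcre i f \<in> ell2" using reindex_gen(2)[OF inj z] c fe unfolding ell2_iff by simp
  moreover have "u \<in> words n" if "Lcre i f u \<noteq> 0" for u
  proof -
    have "u \<noteq> []" "hd u = i" "f (tl u) \<noteq> 0" using that by (auto simp: Lcre_def split: if_splits)
    hence "u = i # tl u" "tl u \<in> words n" using f unfolding fock_def by (auto intro: list.collapse[symmetric])
    thus ?thesis using i words_Cons by metis
  qed
  ultimately show "Lcre i f \<in> fock n" unfolding fock_def by blast
  show "nsq (Lcre i f) = nsq f" unfolding nsq_def using reindex_gen(1)[OF inj z] c by simp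
qed

lemma word_fock: "w \<in> words n \<Longrightarrow> f \<in> fock n \<Longrightarrow> word_op Lcre w f \<in> fock n"
proof (induction w)
  case Nil thus ?case by (simp add: word_op_Nil)
next
  case (Cons i w)
  hence "i \<in> {1..n}" "w \<in> words n" using words_Cons by auto
  thus ?case using Cons Lcre_fock(1) by (simp add: word_op_Cons)
qed

fun idx :: "nat \<Rightarrow> nat list \<Rightarrow> nat" where
  "idx n [] = 1"
| "idx n (i # w) = n * idx n w + (i - 1)"

lemma idx_pos: "n \<ge> 1 \<Longrightarrow> idx n w \<ge> 1"
proof (induction w)
  case Nil thus ?case by simp
next
  case (Cons i w)
  have "n * idx n w \<ge> 1" using Cons by simp
  thus ?case by (simp only: idx.simps)
qed

lemma idx_Cons_modiv:
  assumes "n > 0" "i \<in> {1..n}"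
  shows "idx n (i # w) mod n = i - 1" "idx n (i # w) div n = idx n w"
proof -
  have "i - 1 < n" using assms by auto
  thus "idx n (i # w) mod n = i - 1" "idx n (i # w) div n = idx n w" using assms(1) by auto
qed

lemma idx_inj:
  assumes n: "n \<ge> 2" shows "inj_on (idx n) (words n)"
proof -
  have "\<forall>v\<in>words n. idx n w = idx n v \<longrightarrow> w = v" if "w \<in> words n" for w
    using that
  proof (induction w)
    case Nil
    show ?case
    proof (intro ballI impI)
      fix v assume v: "v \<in> words n" and e: "idx n [] = idx n v"
      show "[] = v"
      proof (cases v)
        case (Cons j v')
        have "idx n v' \<ge> 1" using idx_pos n by simp
        hence "n * idx n v' \<ge> 2" using n by (metis mult_le_mono mult.right_neutral)
        thus ?thesis using e Cons by simp
      qed simp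
    qed
  next
    case (Cons i w)
    have i: "i \<in> {1..n}" and w: "w \<in> words n" using Cons.prems words_Cons by auto
    show ?case
    proof (intro ballI impI)
      fix v assume v: "v \<in> words n" and e: "idx n (i # w) = idx n v"
      show "i # w = v"
      proof (cases v)
        case Nil
        have "idx n w \<ge> 1" using idx_pos n by simp
        hence "n * idx n w \<ge> 2" using n by (metis mult_le_mono mult.right_neutral)
        thus ?thesis using e Nil by simp
      next
        case (Cons j v')
        have j: "j \<in> {1..n}" and v': "v' \<in> words n" using v Cons words_Cons by auto
        have "i - 1 = j - 1" using idx_Cons_modiv(1)[of n i w] idx_Cons_modiv(1)[of n j v'] e Cons i j n by simp
        hence ij: "i = j" using i j by arith
        have "idx n w = idx n v'" using idx_Cons_modiv(2)[of n i w] idx_Cons_modiv(2)[of n j v'] e Cons i j n by simp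
        hence "w = v'" using Cons.IH[OF w] v' by blast
        thus ?thesis using ij Cons by simp
      qed
    qed
  qed
  thus ?thesis unfolding inj_on_def by blast
qed


definition Jset :: "nat \<Rightarrow> nat set" where "Jset n = idx n ` words n"
definition Us :: "nat \<Rightarrow> nat vec \<Rightarrow> nat list vec" where
  "Us n x = (\<lambda>w. if w \<in> words n then x (idx n w) else 0)"
definition Uf :: "nat \<Rightarrow> nat list vec \<Rightarrow> nat vec" where
  "Uf n f = (\<lambda>m. if m \<in> Jset n then f (the_inv_into (words n) (idx n) m) else 0)"
definition Msub :: "nat \<Rightarrow> nat vec set" where
  "Msub n = {x \<in> ell2. \<forall>m. m \<notin> Jset n \<longrightarrow> x m = 0}"

context
  fixes n :: nat
  assumes n: "n \<ge> 2"
begin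

lemma inj_idx: "inj_on (idx n) (words n)" using idx_inj[OF n] .

lemma Uf_at: "w \<in> words n \<Longrightarrow> Uf n f (idx n w) = f w"
  by (simp add: Uf_def Jset_def the_inv_into_f_f[OF inj_idx])

lemma Uf_out: "m \<notin> Jset n \<Longrightarrow> Uf n f m = 0"
  by (simp add: Uf_def)

lemma reindex_Uf:
  assumes f: "f \<in> fock n" and G: "\<And>m. G 0 m = 0"
  shows "infsum (\<lambda>m. G (Uf n f m) m) UNIV = infsum (\<lambda>w. G (f w) (idx n w)) UNIV"
    and "(\<lambda>m. G (Uf n f m) m) summable_on UNIV \<longleftrightarrow> (\<lambda>w. G (f w) (idx n w)) summable_on UNIV"
proof -
  have z: "\<And>u. u \<notin> idx n ` words n \<Longrightarrow> G (Uf n f u) u = 0" using Uf_out G by (simp add: Jset_def)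
  have c: "\<And>w. w \<in> words n \<Longrightarrow> ((\<lambda>m. G (Uf n f m) m) \<circ> idx n) w = G (f w) (idx n w)"
    by (simp add: Uf_at)
  have z2: "\<And>w. w \<notin> words n \<Longrightarrow> G (f w) (idx n w) = 0" using fock_zero[OF f] G by simp
  have "infsum (\<lambda>m. G (Uf n f m) m) UNIV = infsum ((\<lambda>m. G (Uf n f m) m) \<circ> idx n) (words n)"
    by (rule reindex_gen(1)[OF inj_idx z])
  also have "\<dots> = infsum (\<lambda>w. G (f w) (idx n w)) UNIV"
    by (rule infsum_cong_neutral) (use c z2 in auto)
  finally show "infsum (\<lambda>m. G (Uf n f m) m) UNIV = infsum (\<lambda>w. G (f w) (idx n w)) UNIV" .
  have "(\<lambda>m. G (Uf n f m) m) summable_on UNIV \<longleftrightarrow> ((\<lambda>m. G (Uf n f m) m) \<circ> idx n) summable_on (words n)"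
    by (rule reindex_gen(2)[OF inj_idx z])
  also have "\<dots> \<longleftrightarrow> (\<lambda>w. G (f w) (idx n w)) summable_on UNIV"
    by (rule summable_on_cong_neutral) (use c z2 in auto)
  finally show "(\<lambda>m. G (Uf n f m) m) summable_on UNIV \<longleftrightarrow> (\<lambda>w. G (f w) (idx n w)) summable_on UNIV" .
qed

lemma Uf_ell2: "f \<in> fock n \<Longrightarrow> Uf n f \<in> ell2"
  using reindex_Uf(2)[of f "\<lambda>v m. (cmod v)^2"] fock_ell2[of f n] unfolding ell2_iff by simp

lemma nsq_Uf: "f \<in> fock n \<Longrightarrow> nsq (Uf n f) = nsq f"
  using reindex_Uf(1)[of f "\<lambda>v m. (cmod v)^2"] unfolding nsq_def by simp

lemma Uf_M: "f \<in> fock n \<Longrightarrow> Uf n f \<in> Msub n"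
  unfolding Msub_def using Uf_ell2 Uf_out by blast

lemma vinner_Uf: "f \<in> fock n \<Longrightarrow> vinner (Uf n f) y = vinner f (Us n y)"
  unfolding vinner_def using reindex_Uf(1)[of f "\<lambda>v m. cnj v * y m"]
  by (simp add: Us_def fock_zero cong: if_cong) (smt (verit) fock_zero infsum_cong mult_not_zero complex_cnj_zero)

lemma Us_fock:
  assumes x: "x \<in> Msub n" shows "Us n x \<in> fock n" and "nsq (Us n x) = nsq x"
proof -
  let ?F = "\<lambda>m. (cmod (x m))^2"
  have z: "\<And>u. u \<notin> idx n ` words n \<Longrightarrow> ?F u = 0" using x unfolding Msub_def Jset_def by auto
  have c: "\<And>w. w \<in> words n \<Longrightarrow> (?F \<circ> idx n) w = (cmod (Us n x w))^2" by (simp add: Us_def)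
  have z2: "\<And>w. w \<notin> words n \<Longrightarrow> (cmod (Us n x w))^2 = 0" by (simp add: Us_def)
  have "infsum ?F UNIV = infsum (?F \<circ> idx n) (words n)" by (rule reindex_gen(1)[OF inj_idx z])
  also have "\<dots> = infsum (\<lambda>w. (cmod (Us n x w))^2) UNIV"
    by (rule infsum_cong_neutral) (use c z2 in auto)
  finally show "nsq (Us n x) = nsq x" unfolding nsq_def by simp
  have "?F summable_on UNIV \<longleftrightarrow> (?F \<circ> idx n) summable_on (words n)" by (rule reindex_gen(2)[OF inj_idx z])
  also have "\<dots> \<longleftrightarrow> (\<lambda>w. (cmod (Us n x w))^2) summable_on UNIV"
    by (rule summable_on_cong_neutral) (use c z2 in auto)
  finally have "Us n x \<in> ell2" using x unfolding Msub_def ell2_iff by simp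
  thus "Us n x \<in> fock n" unfolding fock_def by (auto simp: Us_def split: if_splits)
qed

lemma UsUf: "f \<in> fock n \<Longrightarrow> Us n (Uf n f) = f"
  by (rule ext) (auto simp: Us_def Uf_at fock_zero)

lemma UfUs:
  assumes x: "x \<in> Msub n" shows "Uf n (Us n x) = x"
proof (rule ext)
  fix m show "Uf n (Us n x) m = x m"
  proof (cases "m \<in> Jset n")
    case True
    then obtain w where w: "w \<in> words n" "m = idx n w" unfolding Jset_def by blast
    thus ?thesis by (simp add: Uf_at Us_def)
  next
    case False thus ?thesis using x unfolding Msub_def by (simp add: Uf_out)
  qed
qed

lemma idx_Cons_J: "i \<in> {1..n} \<Longrightarrow> w \<in> words n \<Longrightarrow> n * idx n w + (i - 1) \<in> Jset n"
  unfolding Jset_def using words_Cons by (metis idx.simps(2) imageI)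

lemma zero_notin_J: "0 \<notin> Jset n"
  unfolding Jset_def using idx_pos[of n] n by (metis imageE not_one_le_zero one_le_numeral order_trans)

lemma Uf_L:
  assumes f: "f \<in> fock n" and i: "i \<in> {1..n}"
  shows "Uf n (Lcre i f) = Vop n i (Uf n f)"
proof (rule ext)
  fix m
  have n0: "n > 0" using n by simp
  have il: "i - 1 < n" using i by auto
  show "Uf n (Lcre i f) m = Vop n i (Uf n f) m"
  proof (cases "m \<in> Jset n")
    case True
    then obtain u where u: "u \<in> words n" "m = idx n u" unfolding Jset_def by blast
    show ?thesis
    proof (cases u)
      case Nil
      have "1 div n = 0" using n by simp
      hence "Vop n i (Uf n f) 1 = 0" using Uf_out[OF zero_notin_J] by (simp add: Vop_def)
      moreover have "Uf n (Lcre i f) (idx n []) = Lcre i f []" by (rule Uf_at) (use u Nil in simp)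
      moreover have "m = idx n []" using u Nil by simp
      moreover have "Lcre i f [] = 0" by (simp add: Lcre_def)
      ultimately show ?thesis by simp
    next
      case (Cons j w)
      have j: "j \<in> {1..n}" and w: "w \<in> words n" using u Cons words_Cons by auto
      have "m mod n = j - 1" "m div n = idx n w" using idx_Cons_modiv[OF n0 j, of w] u Cons by auto
      hence R: "Vop n i (Uf n f) m = (if j - 1 = i - 1 then Uf n f (idx n w) else 0)"
        unfolding Vop_def by simp
      have L: "Uf n (Lcre i f) (idx n u) = Lcre i f u" by (rule Uf_at[OF u(1)])
      have "(j - 1 = i - 1) = (j = i)" using i j by auto
      moreover have "Uf n f (idx n w) = f w" by (rule Uf_at[OF w])
      moreover have "Lcre i f u = (if j = i then f w else 0)" using Cons by (simp add: Lcre_def)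
      ultimately show ?thesis using R L u(2) by simp
    qed
  next
    case False
    have "Vop n i (Uf n f) m = 0"
    proof (cases "m mod n = i - 1 \<and> m div n \<in> Jset n")
      case True
      then obtain w where w: "w \<in> words n" "m div n = idx n w" unfolding Jset_def by blast
      have "m = n * (m div n) + m mod n" by simp
      hence "m = n * idx n w + (i - 1)" using True w by simp
      hence "m \<in> Jset n" using idx_Cons_J[OF i w(1)] by simp
      thus ?thesis using False by simp
    next
      case False thus ?thesis by (auto simp: Vop_def Uf_out)
    qed
    thus ?thesis using False by (simp add: Uf_out)
  qed
qed

lemma Msub_closed: "closed_subspace ell2 (Msub n)"
  unfolding closed_subspace_def
proof (intro conjI ballI allI impI)
  show "Msub n \<subseteq> ell2" unfolding Msub_def by blast
  show "vzero \<in> Msub n" unfolding Msub_def using vzero_ell2 by (auto simp: vzero_def)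
  show "\<And>x y a b. x \<in> Msub n \<Longrightarrow> y \<in> Msub n \<Longrightarrow> (\<lambda>i. a * x i + b * y i) \<in> Msub n"
    unfolding Msub_def using ell2_comb by auto
  fix s x assume h: "(\<forall>k. s k \<in> Msub n) \<and> x \<in> ell2 \<and> (\<lambda>k. vnorm (\<lambda>i. s k i - x i)) \<longlonglongrightarrow> 0"
  have "x m = 0" if m: "m \<notin> Jset n" for m
  proof -
    have "cmod (x m) \<le> vnorm (\<lambda>i. s k i - x i)" for k
    proof -
      have sk: "s k \<in> ell2" "s k m = 0" using h m unfolding Msub_def by auto
      have "(\<lambda>i. s k i - x i) \<in> ell2" using ell2_comb[OF sk(1), of x 1 "-1"] h by simp
      from cmod_le_vnorm[OF this, of m] sk(2) show ?thesis by simp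
    qed
    hence "cmod (x m) \<le> 0" using h by (intro LIMSEQ_le_const[of "\<lambda>k. vnorm (\<lambda>i. s k i - x i)"]) auto
    thus ?thesis by simp
  qed
  thus "x \<in> Msub n" using h unfolding Msub_def by blast
qed

lemma Msub_inv: "invariant_sub ell2 n (Vop n) (Msub n)"
  unfolding invariant_sub_def
proof (intro conjI ballI)
  show "closed_subspace ell2 (Msub n)" by (rule Msub_closed)
  fix i x assume i: "i \<in> {1..n}" and x: "x \<in> Msub n"
  have n0: "n > 0" using n by simp
  have "Vop n i x \<in> ell2" using Vop_ell2[OF n0 i] x unfolding Msub_def by blast
  moreover have "Vop n i x m = 0" if m: "m \<notin> Jset n" for m
  proof (rule ccontr)
    assume "Vop n i x m \<noteq> 0"
    hence h: "m mod n = i - 1" "x (m div n) \<noteq> 0" by (auto simp: Vop_def split: if_splits)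
    hence "m div n \<in> Jset n" using x unfolding Msub_def by blast
    then obtain w where w: "w \<in> words n" "m div n = idx n w" unfolding Jset_def by blast
    have "m = n * (m div n) + m mod n" by simp
    hence "m = n * idx n w + (i - 1)" using h w by simp
    thus False using idx_Cons_J[OF i w(1)] m by simp
  qed
  ultimately show "Vop n i x \<in> Msub n" unfolding Msub_def by blast
qed

lemma bas1_M: "bas 1 \<in> Msub n"
proof -
  have "1 \<in> Jset n" unfolding Jset_def words_def by (metis (mono_tags) empty_subsetI idx.simps(1) imageI list.set(1) mem_Collect_eq)
  thus ?thesis unfolding Msub_def using bas_ell2[of "1::nat"] by (auto simp: bas_def)
qed

lemma Msub_ne: "Msub n \<noteq> {vzero}"
proof
  assume "Msub n = {vzero}"
  hence "bas (1::nat) = vzero" using bas1_M by blast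
  hence "bas (1::nat) (1::nat) = vzero (1::nat)" by (rule fun_cong)
  thus False by (simp add: bas_def vzero_def)
qed

end


lemma topspace_wstar: "vzero \<in> H \<Longrightarrow> topspace (wstar_top H) = UNIV"
proof -
  assume h: "vzero \<in> H"
  have "UNIV \<in> {{T. (\<Sum>k. vinner (T (xs k)) (ys k)) \<in> U} | xs ys U.
        (\<forall>k. xs k \<in> H \<and> ys k \<in> H) \<and> summable (\<lambda>k. (vnorm (xs k))^2)
        \<and> summable (\<lambda>k. (vnorm (ys k))^2) \<and> open U}"
    by (intro CollectI exI[of _ "\<lambda>_. vzero"] exI[of _ UNIV]) (use h in \<open>auto simp: vnorm_nsq\<close>)
  thus ?thesis unfolding wstar_top_def by auto
qed

lemma Ln_bounded: "T \<in> Ln n \<Longrightarrow> bounded_op (fock n) T"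
  unfolding Ln_def by blast

lemma bounded_maps: "bounded_op H T \<Longrightarrow> x \<in> H \<Longrightarrow> T x \<in> H"
  unfolding bounded_op_def by blast

context
  fixes n :: nat
  assumes n: "n \<ge> 2"
begin

definition Phi :: "(nat list, nat list) op \<Rightarrow> (nat, nat) op" where
  "Phi T x = Uf n (T (Us n x))"

lemma Uf_word: "w \<in> words n \<Longrightarrow> f \<in> fock n \<Longrightarrow> Uf n (word_op Lcre w f) = word_op (Vop n) w (Uf n f)"
proof (induction w)
  case Nil thus ?case by (simp add: word_op_Nil)
next
  case (Cons i w)
  hence i: "i \<in> {1..n}" and w: "w \<in> words n" using words_Cons by auto
  have "Uf n (word_op Lcre (i # w) f) = Uf n (Lcre i (word_op Lcre w f))" by (simp add: word_op_Cons)
  also have "\<dots> = Vop n i (Uf n (word_op Lcre w f))" by (rule Uf_L[OF n word_fock[OF w Cons.prems(2)] i])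
  also have "\<dots> = Vop n i (word_op (Vop n) w (Uf n f))" using Cons.IH[OF w Cons.prems(2)] by simp
  finally show ?case by (simp add: word_op_Cons)
qed

lemma Us_lin: "Us n (\<lambda>i. a * x i + b * y i) = (\<lambda>i. a * Us n x i + b * Us n y i)"
  by (rule ext) (simp add: Us_def)

lemma Uf_lin: "Uf n (\<lambda>i. a * x i + b * y i) = (\<lambda>i. a * Uf n x i + b * Uf n y i)"
  by (rule ext) (simp add: Uf_def)

lemma Phi_bounded:
  assumes T: "T \<in> Ln n" shows "bounded_op (Msub n) (Phi T)"
  unfolding bounded_op_def
proof (intro conjI ballI allI)
  have Tb: "bounded_op (fock n) T" by (rule Ln_bounded[OF T])
  show "Phi T x \<in> Msub n" if x: "x \<in> Msub n" for x
    unfolding Phi_def by (rule Uf_M[OF n bounded_maps[OF Tb Us_fock(1)[OF n x]]])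
  show "Phi T (\<lambda>i. a * x i + b * y i) = (\<lambda>i. a * Phi T x i + b * Phi T y i)"
    if x: "x \<in> Msub n" and y: "y \<in> Msub n" for x y a b
    unfolding Phi_def Us_lin bounded_lin[OF Tb Us_fock(1)[OF n x] Us_fock(1)[OF n y]] Uf_lin ..
  obtain C where C: "\<And>f. f \<in> fock n \<Longrightarrow> vnorm (T f) \<le> C * vnorm f" using Tb unfolding bounded_op_def by blast
  have "vnorm (Phi T x) \<le> C * vnorm x" if x: "x \<in> Msub n" for x
  proof -
    have f: "Us n x \<in> fock n" by (rule Us_fock(1)[OF n x])
    have "vnorm (Phi T x) = vnorm (T (Us n x))"
      unfolding Phi_def vnorm_nsq using nsq_Uf[OF n bounded_maps[OF Tb f]] by simp
    also have "\<dots> \<le> C * vnorm (Us n x)" by (rule C[OF f])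
    also have "vnorm (Us n x) = vnorm x" unfolding vnorm_nsq using Us_fock(2)[OF n x] by simp
    finally show ?thesis .
  qed
  thus "\<exists>C. \<forall>x\<in>Msub n. vnorm (Phi T x) \<le> C * vnorm x" by blast
qed

lemma Phi_cont: "continuous_map (subtopology (wstar_top (fock n)) (Ln n)) (wstar_top (Msub n)) Phi"
  unfolding wstar_top_def[of "Msub n"]
proof (rule continuous_on_generated_topo)
  let ?S = "{{T. (\<Sum>k. vinner (T (xs k)) (ys k)) \<in> U} | xs ys U.
        (\<forall>k. xs k \<in> Msub n \<and> ys k \<in> Msub n) \<and> summable (\<lambda>k. (vnorm (xs k))^2)
        \<and> summable (\<lambda>k. (vnorm (ys k))^2) \<and> open U}"
  have vM: "vzero \<in> Msub n" using Msub_closed[OF n] unfolding closed_subspace_def by blast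
  have "UNIV \<in> ?S"
    by (intro CollectI exI[of _ "\<lambda>_. vzero"] exI[of _ UNIV]) (use vM in \<open>auto simp: vnorm_nsq\<close>)
  thus "Phi ` topspace (subtopology (wstar_top (fock n)) (Ln n)) \<subseteq> \<Union>?S" by blast
  fix U assume "U \<in> ?S"
  then obtain xs ys V where U: "U = {T. (\<Sum>k. vinner (T (xs k)) (ys k)) \<in> V}"
    and xs: "\<And>k. xs k \<in> Msub n" and ys: "\<And>k. ys k \<in> Msub n"
    and sx: "summable (\<lambda>k. (vnorm (xs k))^2)" and sy: "summable (\<lambda>k. (vnorm (ys k))^2)" and V: "open V"
    by blast
  define W where "W = {T :: (nat list, nat list) op. (\<Sum>k. vinner (T (Us n (xs k))) (Us n (ys k))) \<in> V}"
  have vn: "\<And>x. x \<in> Msub n \<Longrightarrow> vnorm (Us n x) = vnorm x" unfolding vnorm_nsq using Us_fock(2)[OF n] by simp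
  have "W \<in> {{T. (\<Sum>k. vinner (T (xs k)) (ys k)) \<in> U} | xs ys U.
        (\<forall>k. xs k \<in> fock n \<and> ys k \<in> fock n) \<and> summable (\<lambda>k. (vnorm (xs k))^2)
        \<and> summable (\<lambda>k. (vnorm (ys k))^2) \<and> open U}"
    unfolding W_def
    by (intro CollectI exI[of _ "\<lambda>k. Us n (xs k)"] exI[of _ "\<lambda>k. Us n (ys k)"] exI[of _ V])
       (use xs ys sx sy V Us_fock(1)[OF n] vn in auto)
  hence oW: "openin (wstar_top (fock n)) W" unfolding wstar_top_def by (rule topology_generated_by_Basis)
  have eq: "Phi -` U \<inter> topspace (subtopology (wstar_top (fock n)) (Ln n)) = Ln n \<inter> W"
  proof -
    have "Phi T \<in> U \<longleftrightarrow> T \<in> W" if T: "T \<in> Ln n" for T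
    proof -
      have Tb: "bounded_op (fock n) T" by (rule Ln_bounded[OF T])
      have "vinner (Phi T (xs k)) (ys k) = vinner (T (Us n (xs k))) (Us n (ys k))" for k
        unfolding Phi_def by (rule vinner_Uf[OF n bounded_maps[OF Tb Us_fock(1)[OF n xs]]])
      thus ?thesis unfolding U W_def by simp
    qed
    thus ?thesis using topspace_wstar[OF vzero_fock, of n] by auto
  qed
  show "openin (subtopology (wstar_top (fock n)) (Ln n)) (Phi -` U \<inter> topspace (subtopology (wstar_top (fock n)) (Ln n)))"
    unfolding eq by (rule openin_subtopology_Int2[OF oW])
qed

lemma abs_cont_Msub: "abs_cont n (Msub n) (Vop n)"
  unfolding abs_cont_def
proof (intro exI[of _ Phi] conjI ballI allI)
  show "\<And>T. T \<in> Ln n \<Longrightarrow> bounded_op (Msub n) (Phi T)" by (rule Phi_bounded)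
  show "Phi (word_op Lcre w) x = word_op (Vop n) w x" if "w \<in> words n" "x \<in> Msub n" for w x
    unfolding Phi_def using Uf_word[OF that(1) Us_fock(1)[OF n that(2)]] UfUs[OF n that(2)] by simp
  show "Phi (\<lambda>y u. a * S y u + b * T y u) x = (\<lambda>u. a * Phi S x u + b * Phi T x u)" for S T a b x
    unfolding Phi_def Uf_lin ..
  show "Phi (S \<circ> T) x = Phi S (Phi T x)" if "S \<in> Ln n" "T \<in> Ln n" "x \<in> Msub n" for S T x
    unfolding Phi_def
    using UsUf[OF n bounded_maps[OF Ln_bounded[OF that(2)] Us_fock(1)[OF n that(3)]]] by simp
  show "Phi id x = x" if "x \<in> Msub n" for x unfolding Phi_def using UfUs[OF n that] by simp
  show "continuous_map (subtopology (wstar_top (fock n)) (Ln n)) (wstar_top (Msub n)) Phi" by (rule Phi_cont)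
qed

lemma not_singular: "\<not> singular_tuple n (ell2 :: nat vec set) (Vop n)"
  unfolding singular_tuple_def using abs_cont_Msub Msub_inv[OF n] Msub_ne[OF n] by blast

end


theorem mainTheorem10:
  fixes n :: nat and V :: "nat \<Rightarrow> (nat, nat) op"
  assumes "n \<ge> 2"
    and "\<And>k x m. V k x m = (if m mod n = k - 1 then x (m div n) else 0)"
  shows "isometric_tuple (ell2 :: nat vec set) n V
       \<and> wstar_alg (ell2 :: nat vec set) n V = {T. bounded_op ell2 T}
       \<and> dilation_type n (ell2 :: nat vec set) V"
proof -
  have n0: "n > 0" using assms(1) by simp
  have V: "V = Vop n" by (intro ext) (simp add: assms(2) Vop_def)
  show ?thesis unfolding V
  proof (intro conjI)
    show "isometric_tuple ell2 n (Vop n)" by (rule isometric_Vop[OF n0])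
    show "wstar_alg ell2 n (Vop n) = {T. bounded_op ell2 T}" by (rule wstar_full[OF assms(1)])
    show "dilation_type n ell2 (Vop n)" unfolding dilation_type_def
    proof (intro allI impI)
      fix M assume h: "reducing_sub ell2 n (Vop n) M \<and> M \<noteq> {vzero}"
      hence "M = ell2" using reducing_trivial[OF assms(1)] by blast
      thus "\<not> abs_cont n M (Vop n) \<and> \<not> singular_tuple n M (Vop n)"
        using not_abs_cont[OF assms(1)] not_singular[OF assms(1)] by simp
    qed
  qed
qed

end
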